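(* Let $m,k\in\mathbb{N}$ (so $m,k\ge 1$) and let $l\ge 0$ be an integer with $\gcd(k,l)=1$. On the torus $\mathbb{T}^2=\mathbb{R}^2/(2\pi\mathbb{Z})^2$ consider the family of vector fields $$Y_\epsilon:\quad \dot x=\sin\big(m(ly-kx)\big),\qquad \dot y=\epsilon,$$ with $\epsilon\ge 0$. For $i=1,\dots,m$ let $C_-^i=\{(x,y)\in\mathbb{T}^2:\ ly-kx\equiv 2\pi(i-1)/m \pmod{2\pi}\}$ and $C_+^i=\{(x,y)\in\mathbb{T}^2:\ ly-kx\equiv (2\pi(i-1)+\pi)/m \pmod{2\pi}\}$. These are $2m$ disjoint simple closed curves of singularities of $Y_0$, each wrapping $k$ times vertically and $l$ times horizontally around $\mathbb{T}^2$; the $C_-^i$ consist of normally attracting singularities and the $C_+^i$ of normally repelling singularities of $Y_0$. Then there exist $\epsilon_0>0$ and tubular neighborhoods $\mathcal{U}_\pm^i$ of $C_\pm^i$ in $\mathbb{T}^2$ ($i=1,\dots,m$), independent of $\epsilon$, such that for every $\epsilon\in\,]0,\epsilon_0]$ the vector field $Y_\epsilon$ has exactly one limit cycle $\mathcal{O}_\pm^i$ in $\mathcal{U}_\pm^i$. Each $\mathcal{O}_-^i$ is a hyperbolically attracting non-canard limit cycle and each $\mathcal{O}_+^i$ is a hyperbolically repelling canard limit cycle; each $\mathcal{O}_\pm^i$ is a $(k,l)$-torus knot (it winds $k$ times vertically and $l$ times horizontally around $\mathbb{T}^2$), and $\mathcal{O}_\pm^i\to C_\pm^i$ in the Hausdorff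 sense as $\epsilon\to 0$. Moreover, for fixed $\epsilon\in\,]0,\epsilon_0]$ and any $\tau\in\mathbb{T}^2$ not lying on any of the cycles $\mathcal{O}_\pm^i$, the $\alpha$-limit set $\alpha(\tau)$ is one of the repelling cycles $\mathcal{O}_+^1,\dots,\mathcal{O}_+^m$ and the $\omega$-limit set $\omega(\tau)$ is one of the attracting cycles $\mathcal{O}_-^1,\dots,\mathcal{O}_-^m$.
   Context: Points of $\mathbb{T}^2$ are written $(x,y)$ with $x,y\in[0,2\pi[$ and opposite sides identified; "vertically" refers to the $y$-direction and "horizontally" to the $x$-direction: a closed curve winds $k$ times vertically and $l$ times horizontally if it crosses the horizontal circle $[0,2\pi[\times\{0\}$ exactly $k$ times and the vertical circle $\{0\}\times[0,2\pi[$ exactly $l$ times (in the same homotopy class as the curves $C^i_\pm$); such a simple closed curve is called a $(k,l)$-torus knot. A limit cycle of $Y_\epsilon$ is called a canard limit cycle if it contains a part passing near normally repelling portions of the critical curve (the set of singularities of $Y_0$), and non-canard otherwise. A limit cycle is hyperbolic if the derivative of its Poincaré return map differs from $1$ in absolute value. *)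

theory Defs
  imports "HOL-Analysis.Analysis"
begin

text \<open>The torus T^2 = R^2/(2 pi Z)^2.  A subset of the torus is represented by its
  (lattice-periodic) lift in R^2 = real \<times> real; a point of the torus by any representative.
  Distances of points to periodic sets in R^2 coincide with the flat torus distances.\<close>

definition lattice :: "(real \<times> real) set" where
  "lattice = {(2 * pi * of_int i, 2 * pi * of_int j) | i j :: int. True}"

definition teq :: "real \<times> real \<Rightarrow> real \<times> real \<Rightarrow> bool" where
  "teq p q \<longleftrightarrow> p - q \<in> lattice"

definition tdist :: "real \<times> real \<Rightarrow> real \<times> real \<Rightarrow> real" where
  "tdist p q = infdist p {q + w | w. w \<in> lattice}"

definition Yfield :: "nat \<Rightarrow> nat \<Rightarrow> nat \<Rightarrow> real \<Rightarrow> real \<times> real \<Rightarrow> real \<times> real" where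
  "Yfield m k l \<epsilon> = (\<lambda>(x, y). (sin (real m * (real l * y - real k * x)), \<epsilon>))"

definition Cminus :: "nat \<Rightarrow> nat \<Rightarrow> nat \<Rightarrow> nat \<Rightarrow> (real \<times> real) set" where
  "Cminus m k l i = {(x, y). \<exists>n::int.
      real l * y - real k * x = 2 * pi * (real i - 1) / real m + 2 * pi * of_int n}"

definition Cplus :: "nat \<Rightarrow> nat \<Rightarrow> nat \<Rightarrow> nat \<Rightarrow> (real \<times> real) set" where
  "Cplus m k l i = {(x, y). \<exists>n::int.
      real l * y - real k * x = (2 * pi * (real i - 1) + pi) / real m + 2 * pi * of_int n}"

definition is_sol :: "(real \<times> real \<Rightarrow> real \<times> real) \<Rightarrow> (real \<Rightarrow> real \<times> real) \<Rightarrow> bool" where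
  "is_sol F \<gamma> \<longleftrightarrow> (\<forall>t. (\<gamma> has_vector_derivative F (\<gamma> t)) (at t))"

definition torus_image :: "(real \<Rightarrow> real \<times> real) \<Rightarrow> real set \<Rightarrow> (real \<times> real) set" where
  "torus_image \<gamma> I = {p. \<exists>t\<in>I. teq p (\<gamma> t)}"

definition periodic_orbit :: "(real \<times> real \<Rightarrow> real \<times> real) \<Rightarrow> (real \<times> real) set \<Rightarrow> bool" where
  "periodic_orbit F Orb \<longleftrightarrow> (\<exists>\<gamma> T. is_sol F \<gamma> \<and> T > 0 \<and> teq (\<gamma> T) (\<gamma> 0) \<and>
       F (\<gamma> 0) \<noteq> 0 \<and> Orb = torus_image \<gamma> UNIV)"

definition limit_cycle :: "(real \<times> real \<Rightarrow> real \<times> real) \<Rightarrow> (real \<times> real) set \<Rightarrow> bool" where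
  "limit_cycle F Orb \<longleftrightarrow> periodic_orbit F Orb \<and>
     (\<exists>e>0. \<forall>Orb'. periodic_orbit F Orb' \<and> Orb' \<noteq> Orb \<longrightarrow> (\<exists>p\<in>Orb'. infdist p Orb \<ge> e))"

text \<open>mu is the derivative of the Poincare return map of the periodic orbit Orb, computed on a
  transversal segment {p0 + s v} through a point p0 of Orb: a point p0 + s v returns (after a time
  tau s depending continuously on s, tau 0 = T the period) to p0 + g s v on the torus.\<close>

definition poincare_multiplier ::
  "(real \<times> real \<Rightarrow> real \<times> real) \<Rightarrow> (real \<times> real) set \<Rightarrow> real \<Rightarrow> bool" where
  "poincare_multiplier F Orb \<mu> \<longleftrightarrow>
     (\<exists>\<gamma> T v \<delta> \<tau> g. is_sol F \<gamma> \<and> T > 0 \<and> teq (\<gamma> T) (\<gamma> 0) \<and> F (\<gamma> 0) \<noteq> 0 \<and>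
        Orb = torus_image \<gamma> UNIV \<and>
        fst (F (\<gamma> 0)) * snd v - snd (F (\<gamma> 0)) * fst v \<noteq> 0 \<and>
        \<delta> > 0 \<and> continuous_on {-\<delta><..<\<delta>} \<tau> \<and> \<tau> 0 = T \<and> g 0 = 0 \<and>
        (\<forall>s\<in>{-\<delta><..<\<delta>}. \<exists>\<psi>. is_sol F \<psi> \<and> \<psi> 0 = \<gamma> 0 + s *\<^sub>R v \<and>
              teq (\<psi> (\<tau> s)) (\<gamma> 0 + g s *\<^sub>R v)) \<and>
        (g has_real_derivative \<mu>) (at 0))"

definition hyperbolic_attracting :: "(real \<times> real \<Rightarrow> real \<times> real) \<Rightarrow> (real \<times> real) set \<Rightarrow> bool" where
  "hyperbolic_attracting F Orb \<longleftrightarrow> limit_cycle F Orb \<and> (\<exists>\<mu>. poincare_multiplier F Orb \<mu> \<and> \<bar>\<mu>\<bar> < 1)"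

definition hyperbolic_repelling :: "(real \<times> real \<Rightarrow> real \<times> real) \<Rightarrow> (real \<times> real) set \<Rightarrow> bool" where
  "hyperbolic_repelling F Orb \<longleftrightarrow> limit_cycle F Orb \<and> (\<exists>\<mu>. poincare_multiplier F Orb \<mu> \<and> \<bar>\<mu>\<bar> > 1)"

definition normally_repelling :: "(real \<times> real \<Rightarrow> real \<times> real) \<Rightarrow> real \<times> real \<Rightarrow> bool" where
  "normally_repelling F p \<longleftrightarrow> F p = 0 \<and> (\<exists>D. (F has_derivative D) (at p) \<and>
      (\<exists>v. v \<noteq> 0 \<and> D v = 0) \<and> (\<exists>w c. w \<noteq> 0 \<and> c > 0 \<and> D w = c *\<^sub>R w))"

text \<open>A family of limit cycles Orb eps (eps \<rightarrow> 0+) of Y_eps is canard if it passes (in the limit)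
  near a portion of the normally repelling part of the critical curve of Y_0 = F0: there is a
  nonempty piece (ball \<inter> repelling set) of that part which is uniformly approached by Orb eps.\<close>

definition canard_family ::
  "(real \<times> real \<Rightarrow> real \<times> real) \<Rightarrow> (real \<Rightarrow> (real \<times> real) set) \<Rightarrow> bool" where
  "canard_family F0 Orb \<longleftrightarrow> (\<exists>a r. r > 0 \<and> normally_repelling F0 a \<and>
      (\<forall>e>0. eventually (\<lambda>\<epsilon>. \<forall>b. b \<in> ball a r \<and> normally_repelling F0 b \<longrightarrow>
                                     infdist b (Orb \<epsilon>) < e) (at_right 0)))"

definition torus_knot :: "nat \<Rightarrow> nat \<Rightarrow> (real \<times> real) set \<Rightarrow> bool" where
  "torus_knot k l Orb \<longleftrightarrow> (\<exists>\<gamma> T. T > 0 \<and> continuous_on UNIV \<gamma> \<and>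
      \<gamma> T = \<gamma> 0 + (2 * pi * real l, 2 * pi * real k) \<and>
      (\<forall>s\<in>{0..<T}. \<forall>t\<in>{0..<T}. teq (\<gamma> s) (\<gamma> t) \<longrightarrow> s = t) \<and>
      Orb = torus_image \<gamma> {0..T})"

definition hausdorff_tendsto :: "(real \<Rightarrow> (real \<times> real) set) \<Rightarrow> (real \<times> real) set \<Rightarrow> bool" where
  "hausdorff_tendsto Orb C \<longleftrightarrow> (\<forall>e>0. eventually (\<lambda>\<epsilon>.
       (\<forall>p\<in>Orb \<epsilon>. infdist p C < e) \<and> (\<forall>q\<in>C. infdist q (Orb \<epsilon>) < e)) (at_right 0))"

definition omega_limit :: "(real \<times> real \<Rightarrow> real \<times> real) \<Rightarrow> real \<times> real \<Rightarrow> (real \<times> real) set" where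
  "omega_limit F p = {q. \<exists>\<gamma> tn. is_sol F \<gamma> \<and> \<gamma> 0 = p \<and> filterlim tn at_top sequentially \<and>
       (\<lambda>n. tdist (\<gamma> (tn n)) q) \<longlonglongrightarrow> 0}"

definition alpha_limit :: "(real \<times> real \<Rightarrow> real \<times> real) \<Rightarrow> real \<times> real \<Rightarrow> (real \<times> real) set" where
  "alpha_limit F p = {q. \<exists>\<gamma> tn. is_sol F \<gamma> \<and> \<gamma> 0 = p \<and> filterlim tn at_bot sequentially \<and>
       (\<lambda>n. tdist (\<gamma> (tn n)) q) \<longlonglongrightarrow> 0}"

end

theory Submission imports Defs begin

lemma uniq_scalar:
  fixes f g h :: "real \<Rightarrow> real"
  assumes L: "L \<ge> 0" "\<And>x y. \<bar>h x - h y\<bar> \<le> L * \<bar>x - y\<bar>"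
    and df: "\<And>t. (f has_real_derivative h (f t)) (at t)"
    and dg: "\<And>t. (g has_real_derivative h (g t)) (at t)"
    and e0: "f 0 = g 0"
  shows "f t = g t"
proof -
  define D where "D t = (f t - g t)^2" for t
  have dD: "(D has_real_derivative 2 * (f t - g t) * (h (f t) - h (g t))) (at t)" for t
    unfolding D_def by (auto intro!: derivative_eq_intros df dg)
  have bnd: "\<bar>2 * (f t - g t) * (h (f t) - h (g t))\<bar> \<le> 2 * L * D t" for t
  proof -
    have "\<bar>2 * (f t - g t) * (h (f t) - h (g t))\<bar> = 2 * \<bar>f t - g t\<bar> * \<bar>h (f t) - h (g t)\<bar>"
      by (simp only: abs_mult abs_numeral)
    also have "\<dots> \<le> 2 * \<bar>f t - g t\<bar> * (L * \<bar>f t - g t\<bar>)"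
      by (intro mult_left_mono L(2)) auto
    also have "\<dots> = 2 * L * D t" by (simp add: D_def power2_eq_square abs_mult_self_eq algebra_simps)
    finally show ?thesis .
  qed
  have D0: "D 0 = 0" using e0 by (simp add: D_def)
  have Dnn: "D t \<ge> 0" for t by (simp add: D_def)
  have "D t = 0"
  proof (cases "t \<ge> 0")
    case True
    define E where "E t = D t * exp (- (2 * L) * t)" for t
    have "E 0 \<ge> E t"
    proof (rule DERIV_nonpos_imp_nonincreasing[OF True])
      fix x
      have "(E has_real_derivative (2 * (f x - g x) * (h (f x) - h (g x))) * exp (- (2 * L) * x)
              + D x * (exp (- (2 * L) * x) * (- (2 * L)))) (at x)"
        unfolding E_def by (auto intro!: derivative_eq_intros dD)
      moreover have "(2 * (f x - g x) * (h (f x) - h (g x))) * exp (- (2 * L) * x)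
              + D x * (exp (- (2 * L) * x) * (- (2 * L))) \<le> 0"
      proof -
        have "(2 * (f x - g x) * (h (f x) - h (g x))) \<le> 2 * L * D x" using bnd[of x] by linarith
        hence "(2 * (f x - g x) * (h (f x) - h (g x))) * exp (- (2 * L) * x) \<le> (2 * L * D x) * exp (- (2 * L) * x)"
          by (intro mult_right_mono) auto
        thus ?thesis by (simp add: algebra_simps)
      qed
      ultimately show "\<exists>y. DERIV E x :> y \<and> y \<le> 0" by blast
    qed
    hence "E t \<le> 0" using D0 by (simp add: E_def)
    moreover have "E t \<ge> 0" using Dnn by (simp add: E_def)
    ultimately have "E t = 0" by simp
    thus ?thesis by (simp add: E_def)
  next
    case False
    define E where "E t = D t * exp ((2 * L) * t)" for t
    have "E t \<le> E 0"
    proof (rule DERIV_nonneg_imp_nondecreasing[of t 0 E])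
      show "t \<le> 0" using False by simp
      fix x
      have "(E has_real_derivative (2 * (f x - g x) * (h (f x) - h (g x))) * exp ((2 * L) * x)
              + D x * (exp ((2 * L) * x) * ((2 * L)))) (at x)"
        unfolding E_def by (auto intro!: derivative_eq_intros dD)
      moreover have "(2 * (f x - g x) * (h (f x) - h (g x))) * exp ((2 * L) * x)
              + D x * (exp ((2 * L) * x) * ((2 * L))) \<ge> 0"
      proof -
        have "- 2 * L * D x \<le> (2 * (f x - g x) * (h (f x) - h (g x)))" using bnd[of x] by linarith
        hence "(- 2 * L * D x) * exp ((2 * L) * x) \<le> (2 * (f x - g x) * (h (f x) - h (g x))) * exp ((2 * L) * x)"
          by (intro mult_right_mono) auto
        thus ?thesis by (simp add: algebra_simps)
      qed
      ultimately show "\<exists>y. DERIV E x :> y \<and> y \<ge> 0" by blast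
    qed
    hence "E t \<le> 0" using D0 by (simp add: E_def)
    moreover have "E t \<ge> 0" using Dnn by (simp add: E_def)
    ultimately have "E t = 0" by simp
    thus ?thesis by (simp add: E_def)
  qed
  thus ?thesis by (simp add: D_def)
qed

lemma sin_lip: fixes x y :: real shows "\<bar>sin x - sin y\<bar> \<le> \<bar>x - y\<bar>"
proof -
  have "\<bar>sin x - sin y\<bar> = 2 * \<bar>sin ((x - y) / 2)\<bar> * \<bar>cos ((x + y) / 2)\<bar>"
    by (simp only: sin_diff_sin abs_mult abs_numeral)
  also have "\<dots> \<le> 2 * \<bar>(x - y) / 2\<bar> * 1"
    by (intro mult_mono abs_sin_x_le_abs_x) auto
  finally show ?thesis by simp
qed

lemma cos_lip: fixes x y :: real shows "\<bar>cos x - cos y\<bar> \<le> \<bar>x - y\<bar>"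
  using sin_lip[of "x + pi/2" "y + pi/2"] by (simp add: sin_add)

lemma sin_2pin: "sin (x + 2 * pi * of_int n) = sin (x::real)"
  by (simp add: sin_add)
lemma cos_2pin: "cos (x + 2 * pi * of_int n) = cos (x::real)"
  by (simp add: cos_add)

lemma aux_div1: fixes B x y c s d :: real
  shows "B * (x / d * c - y / d * s) = (x * (B * c) - y * (B * s)) / d"
  by (cases "d = 0") (simp_all add: field_simps)
lemma aux_div2: fixes B x y c s d :: real
  shows "B * (- (x / d * c + y / d * s)) = - (x * (B * c) + y * (B * s)) / d"
  by (cases "d = 0") (simp_all add: field_simps)

lemma sin_2arctan: fixes w :: real shows "sin (2 * arctan w) = 2 * w / (1 + w^2)"
proof -
  have "sin (2 * arctan w) = 2 * sin (arctan w) * cos (arctan w)" by (rule sin_double)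
  also have "\<dots> = 2 * w / (sqrt (1 + w^2) * sqrt (1 + w^2))"
    by (simp add: sin_arctan cos_arctan)
  also have "\<dots> = 2 * w / (1 + w^2)"
    by (subst real_sqrt_mult_self) (simp add: add_nonneg_nonneg)
  finally show ?thesis .
qed

lemma cos_2arctan: fixes w :: real shows "cos (2 * arctan w) = (1 - w^2) / (1 + w^2)"
proof -
  have "cos (2 * arctan w) = (cos (arctan w))^2 - (sin (arctan w))^2" by (rule cos_double)
  also have "\<dots> = 1 / (1 + w^2) - w^2 / (1 + w^2)"
    by (simp add: sin_arctan cos_arctan power_divide)
  also have "\<dots> = (1 - w^2) / (1 + w^2)" by (simp add: diff_divide_distrib)
  finally show ?thesis .
qed

lemma exp_neg_lim: fixes c :: real assumes "c > 0" shows "((\<lambda>t. exp (- c * t)) \<longlongrightarrow> 0) at_top"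
proof -
  have "LIM t at_top. (- c) * t :> at_bot"
    by (rule filterlim_tendsto_neg_mult_at_bot[OF tendsto_const _ filterlim_ident]) (use assms in simp)
  thus ?thesis using filterlim_compose[OF exp_at_bot] by simp
qed

lemma exp_pos_lim_bot: fixes c :: real assumes "c > 0" shows "((\<lambda>t. exp (c * t)) \<longlongrightarrow> 0) at_bot"
  unfolding filterlim_at_bot_mirror using exp_neg_lim[OF assms] by simp

lemma rep_arctan:
  fixes x c :: real
  assumes "\<And>n::int. x \<noteq> c + pi + 2 * pi * of_int n"
  shows "\<exists>n::int. \<exists>w. x = c + 2 * pi * of_int n + 2 * arctan w"
proof -
  define n where "n = floor ((x - c + pi) / (2 * pi))"
  have "of_int n \<le> (x - c + pi) / (2 * pi)" "(x - c + pi) / (2 * pi) < of_int n + 1"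
    unfolding n_def by linarith+
  hence r1: "2 * pi * of_int n \<le> x - c + pi" and r2: "x - c + pi < 2 * pi * of_int n + 2 * pi"
    using pi_gt_zero by (simp_all add: field_simps)
  define r where "r = x - c - 2 * pi * of_int n"
  have "r \<noteq> - pi"
  proof
    assume "r = - pi"
    hence "x = c + pi + 2 * pi * of_int (n - 1)" by (simp add: r_def algebra_simps)
    thus False using assms by blast
  qed
  hence rb: "- pi < r" "r < pi" using r1 r2 unfolding r_def by auto
  have "arctan (tan (r / 2)) = r / 2" by (rule arctan_tan) (use rb in auto)
  hence "x = c + 2 * pi * of_int n + 2 * arctan (tan (r / 2))" by (simp add: r_def)
  thus ?thesis by blast
qed

lemma arctan_diff_bound: fixes u v :: real shows "\<bar>2 * arctan u - 2 * arctan v\<bar> < 2 * pi"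
  using arctan_lbound[of u] arctan_ubound[of u] arctan_lbound[of v] arctan_ubound[of v] by linarith

text \<open>Scalar equation theta' = A - B sin theta, 0 \<le> A < B.\<close>

locale scal =
  fixes A B :: real
  assumes AB: "0 \<le> A" "A < B"
begin

definition Om :: real where "Om = sqrt (B^2 - A^2)"
definition al :: real where "al = arcsin (A / B)"
definition aa :: real where "aa = A / Om"

lemma B_pos: "B > 0" using AB by simp
lemma Om_pos: "Om > 0"
  unfolding Om_def using AB by (simp add: power_strict_mono)
lemma AB_le1: "A / B < 1" "0 \<le> A / B" using AB B_pos by auto
lemma sin_al: "sin al = A / B" unfolding al_def using AB_le1 by simp
lemma cos_al: "cos al = Om / B"
proof -
  have "cos al = sqrt (1 - (A/B)^2)" unfolding al_def using AB_le1 by (simp add: cos_arcsin)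
  also have "1 - (A/B)^2 = (B^2 - A^2) / B^2" using B_pos by (simp add: field_simps power2_eq_square)
  also have "sqrt \<dots> = Om / B" unfolding Om_def using B_pos by (simp add: real_sqrt_divide)
  finally show ?thesis .
qed
lemma Bsin: "B * sin al = A" using sin_al B_pos by simp
lemma Bcos: "B * cos al = Om" using cos_al B_pos by simp
lemma al_bounds: "0 \<le> al" "al < pi/2"
proof -
  show "0 \<le> al" unfolding al_def using AB_le1 arcsin_le_arcsin[of 0 "A/B"] by simp
  have "al \<le> pi/2" unfolding al_def using AB_le1 arcsin_bounded[of "A/B"] by simp
  moreover have "al \<noteq> pi/2"
  proof
    assume "al = pi/2" hence "sin al = 1" by (simp only: sin_pi_half)
    with sin_al AB_le1 show False by simp
  qed
  ultimately show "al < pi/2" by simp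
qed
lemma tan_al: "tan al = aa"
  unfolding tan_def aa_def using sin_al cos_al B_pos by simp
lemma arctan_aa: "arctan aa = al"
  using tan_al al_bounds arctan_tan[of al] by simp

lemma sol1:
  fixes n :: int and w0 :: real
  defines "th \<equiv> \<lambda>t. - al + 2 * pi * of_int n + 2 * arctan (aa + (w0 - aa) * exp (- Om * t))"
  shows "(th has_real_derivative (A - B * sin (th t))) (at t)"
proof -
  define W where "W = aa + (w0 - aa) * exp (- Om * t)"
  have d: "(th has_real_derivative 2 * ((w0 - aa) * (exp (- Om * t) * (- Om))) / (1 + W^2)) (at t)"
    unfolding th_def W_def by (auto intro!: derivative_eq_intros simp: power2_eq_square divide_simps)
  have "sin (th t) = sin (2 * arctan W - al)"
  proof -
    have "th t = (2 * arctan W - al) + 2 * pi * of_int n" by (simp add: th_def W_def)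
    thus ?thesis by (simp only: sin_2pin)
  qed
  also have "\<dots> = sin (2 * arctan W) * cos al - cos (2 * arctan W) * sin al" by (rule sin_diff)
  also have "\<dots> = (2 * W / (1 + W^2)) * cos al - ((1 - W^2) / (1 + W^2)) * sin al"
    by (simp only: sin_2arctan cos_2arctan)
  finally have e: "sin (th t) = \<dots>" .
  have pos: "1 + W^2 > 0" by (simp add: add_pos_nonneg)
  have "B * sin (th t) = (2 * W * (B * cos al) - (1 - W^2) * (B * sin al)) / (1 + W^2)"
    unfolding e by (rule aux_div1)
  hence "B * sin (th t) = (2 * W * Om - (1 - W^2) * A) / (1 + W^2)"
    using Bsin Bcos by simp
  moreover have "Om * aa = A" unfolding aa_def using Om_pos by simp
  moreover have "1 + W^2 > 0" by (simp add: add_pos_nonneg)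
  ultimately have "A - B * sin (th t) = 2 * ((w0 - aa) * (exp (- Om * t) * (- Om))) / (1 + W^2)"
    by (simp add: field_simps W_def power2_eq_square)
  thus ?thesis using d by simp
qed

lemma sol2:
  fixes n :: int and w0 :: real
  defines "th \<equiv> \<lambda>t. al - pi + 2 * pi * of_int n + 2 * arctan (- aa + (w0 + aa) * exp (Om * t))"
  shows "(th has_real_derivative (A - B * sin (th t))) (at t)"
proof -
  define W where "W = - aa + (w0 + aa) * exp (Om * t)"
  have d: "(th has_real_derivative 2 * ((w0 + aa) * (exp (Om * t) * Om)) / (1 + W^2)) (at t)"
    unfolding th_def W_def by (auto intro!: derivative_eq_intros simp: power2_eq_square divide_simps)
  have "sin (th t) = - sin (2 * arctan W + al)"
  proof -
    have "th t = (2 * arctan W + al - pi) + 2 * pi * of_int n" by (simp add: th_def W_def)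
    hence "sin (th t) = sin (2 * arctan W + al - pi)" by (simp only: sin_2pin)
    thus ?thesis by (simp add: sin_diff)
  qed
  also have "\<dots> = - (sin (2 * arctan W) * cos al + cos (2 * arctan W) * sin al)" by (simp add: sin_add)
  also have "\<dots> = - ((2 * W / (1 + W^2)) * cos al + ((1 - W^2) / (1 + W^2)) * sin al)"
    by (simp only: sin_2arctan cos_2arctan)
  finally have e: "sin (th t) = \<dots>" .
  have pos: "1 + W^2 > 0" by (simp add: add_pos_nonneg)
  have "B * sin (th t) = - (2 * W * (B * cos al) + (1 - W^2) * (B * sin al)) / (1 + W^2)"
    unfolding e by (rule aux_div2)
  hence "B * sin (th t) = - (2 * W * Om + (1 - W^2) * A) / (1 + W^2)"
    using Bsin Bcos by simp
  moreover have "Om * aa = A" unfolding aa_def using Om_pos by simp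
  moreover have "1 + W^2 > 0" by (simp add: add_pos_nonneg)
  ultimately have "A - B * sin (th t) = 2 * ((w0 + aa) * (exp (Om * t) * Om)) / (1 + W^2)"
    by (simp add: field_simps W_def power2_eq_square)
  thus ?thesis using d by simp
qed

definition th1 :: "int \<Rightarrow> real \<Rightarrow> real \<Rightarrow> real" where
  "th1 n w0 t = - al + 2 * pi * of_int n + 2 * arctan (aa + (w0 - aa) * exp (- Om * t))"
definition th2 :: "int \<Rightarrow> real \<Rightarrow> real \<Rightarrow> real" where
  "th2 n w0 t = al - pi + 2 * pi * of_int n + 2 * arctan (- aa + (w0 + aa) * exp (Om * t))"

lemma th1_sol: "(th1 n w0 has_real_derivative (A - B * sin (th1 n w0 t))) (at t)"
  using sol1[of n w0 t] unfolding th1_def .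
lemma th2_sol: "(th2 n w0 has_real_derivative (A - B * sin (th2 n w0 t))) (at t)"
  using sol2[of n w0 t] unfolding th2_def .
lemma th1_0: "th1 n w0 0 = - al + 2 * pi * of_int n + 2 * arctan w0" by (simp add: th1_def)
lemma th2_0: "th2 n w0 0 = al - pi + 2 * pi * of_int n + 2 * arctan w0" by (simp add: th2_def)

lemma th1_lim: "(th1 n w0 \<longlongrightarrow> al + 2 * pi * of_int n) at_top"
proof -
  have "((\<lambda>t. - al + 2 * pi * of_int n + 2 * arctan (aa + (w0 - aa) * exp (- Om * t))) \<longlongrightarrow>
        - al + 2 * pi * of_int n + 2 * arctan (aa + (w0 - aa) * 0)) at_top"
    by (intro tendsto_intros exp_neg_lim Om_pos)
  thus ?thesis unfolding th1_def using arctan_aa by simp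
qed

lemma th2_lim: "(th2 n w0 \<longlongrightarrow> - pi - al + 2 * pi * of_int n) at_bot"
proof -
  have lim: "((\<lambda>t. al - pi + 2 * pi * of_int n + 2 * arctan (- aa + (w0 + aa) * exp (Om * t))) \<longlongrightarrow>
        al - pi + 2 * pi * of_int n + 2 * arctan (- aa + (w0 + aa) * 0)) at_bot"
    by (intro tendsto_intros exp_pos_lim_bot Om_pos)
  have eq: "al - pi + 2 * pi * of_int n + 2 * arctan (- aa + (w0 + aa) * 0) = - pi - al + 2 * pi * of_int n"
    using arctan_aa by (simp add: arctan_minus)
  show ?thesis using lim unfolding eq th2_def[abs_def] .
qed

lemma uniq:
  assumes "\<And>t. (f has_real_derivative (A - B * sin (f t))) (at t)"
    "\<And>t. (g has_real_derivative (A - B * sin (g t))) (at t)" "f 0 = g 0"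
  shows "f t = g t"
proof (rule uniq_scalar[where f = f and g = g and h = "\<lambda>x. A - B * sin x" and L = B])
  show "0 \<le> B" using B_pos by simp
  fix x y
  have "\<bar>A - B * sin x - (A - B * sin y)\<bar> = B * \<bar>sin x - sin y\<bar>"
    using B_pos by (simp add: abs_mult right_diff_distrib[symmetric] abs_minus_commute)
  also have "\<dots> \<le> B * \<bar>x - y\<bar>" using sin_lip B_pos by (simp add: mult_left_mono)
  finally show "\<bar>A - B * sin x - (A - B * sin y)\<bar> \<le> B * \<bar>x - y\<bar>" .
qed (use assms in auto)

lemma cos_al_pos: "cos al > 0" using cos_al Om_pos B_pos by simp
lemma inv_cos2: "inverse ((cos al)^2) = 1 + aa^2"
proof -
  have "(cos al)^2 + (sin al)^2 = 1" by simp
  hence "inverse ((cos al)^2) = ((cos al)^2 + (sin al)^2) / (cos al)^2" by (simp add: field_simps)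
  also have "\<dots> = 1 + (tan al)^2" using cos_al_pos by (simp add: tan_def power_divide field_simps)
  finally show ?thesis using tan_al by simp
qed

lemma th1_deriv: "((\<lambda>s. th1 n (tan (al - c * s)) T) has_real_derivative (- 2 * c * exp (- Om * T))) (at 0)"
proof -
  let ?E = "exp (- Om * T)"
  have ct: "cos (al - c * 0) \<noteq> 0" using cos_al_pos by simp
  have "((\<lambda>s. th1 n (tan (al - c * s)) T) has_real_derivative
     2 * (((inverse ((cos (al - c * 0))^2) * (0 - c * 1)) * ?E) / (1 + (aa + (tan (al - c * 0) - aa) * ?E)^2))) (at 0)"
    unfolding th1_def
    apply (rule derivative_eq_intros DERIV_tan[THEN DERIV_chain2] refl ct)+
    apply (simp add: power2_eq_square divide_simps)
    done
  moreover have "2 * (((inverse ((cos (al - c * 0))^2) * (0 - c * 1)) * ?E) / (1 + (aa + (tan (al - c * 0) - aa) * ?E)^2))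
      = - 2 * c * ?E"
  proof -
    have p: "1 + aa^2 \<noteq> 0" by (metis add_pos_nonneg zero_le_power2 zero_less_one less_irrefl)
    have "2 * ((1 + aa^2) * (- c) * ?E) / (1 + aa^2) = - 2 * c * ?E" using p by simp
    thus ?thesis using inv_cos2 tan_al p by simp
  qed
  ultimately show ?thesis by simp
qed

lemma th2_deriv: "((\<lambda>s. th2 n (tan (- al - c * s)) T) has_real_derivative (- 2 * c * exp (Om * T))) (at 0)"
proof -
  let ?E = "exp (Om * T)"
  have ct: "cos (- al - c * 0) \<noteq> 0" using cos_al_pos by simp
  have "((\<lambda>s. th2 n (tan (- al - c * s)) T) has_real_derivative
     2 * (((inverse ((cos (- al - c * 0))^2) * (0 - c * 1)) * ?E) / (1 + (- aa + (tan (- al - c * 0) + aa) * ?E)^2))) (at 0)"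
    unfolding th2_def
    apply (rule derivative_eq_intros DERIV_tan[THEN DERIV_chain2] refl ct)+
    apply (simp add: power2_eq_square divide_simps)
    done
  moreover have "2 * (((inverse ((cos (- al - c * 0))^2) * (0 - c * 1)) * ?E) / (1 + (- aa + (tan (- al - c * 0) + aa) * ?E)^2))
      = - 2 * c * ?E"
  proof -
    have p: "1 + aa^2 \<noteq> 0" by (metis add_pos_nonneg zero_le_power2 zero_less_one less_irrefl)
    have "2 * ((1 + aa^2) * (- c) * ?E) / (1 + aa^2) = - 2 * c * ?E" using p by simp
    thus ?thesis using inv_cos2 tan_al p by simp
  qed
  ultimately show ?thesis by simp
qed

lemma eq_sol2: "th2 n (- aa) t = - pi - al + 2 * pi * of_int n"
  using arctan_aa by (simp add: th2_def arctan_minus)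

lemma eq_sol1: "(\<lambda>t. al + 2 * pi * of_int n) = th1 n aa"
  using arctan_aa by (simp add: th1_def fun_eq_iff)

lemma exists_sol: "\<exists>f. f 0 = x \<and> (\<forall>t. (f has_real_derivative (A - B * sin (f t))) (at t))"
proof (cases "\<exists>n::int. x = - al + pi + 2 * pi * of_int n")
  case True
  then obtain n :: int where n: "x = - al + pi + 2 * pi * of_int n" by blast
  have "A - B * sin x = 0"
  proof -
    have "x = (pi - al) + 2 * pi * of_int n" using n by simp
    hence "sin x = sin (pi - al)" by (simp only: sin_2pin)
    thus ?thesis using Bsin by simp
  qed
  thus ?thesis by (intro exI[of _ "\<lambda>t. x"]) auto
next
  case False
  then obtain n w where "x = - al + 2 * pi * of_int n + 2 * arctan w"
    using rep_arctan[of x "- al"] by (auto simp: algebra_simps)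
  thus ?thesis by (intro exI[of _ "th1 n w"]) (simp add: th1_0 th1_sol)
qed

lemma periodic_equil:
  assumes sol: "\<And>t. (f has_real_derivative (A - B * sin (f t))) (at t)"
    and T: "T > 0" and per: "f T - f 0 = 2 * pi * of_int z"
  shows "\<exists>n::int. f 0 = al + 2 * pi * of_int n \<or> f 0 = pi - al + 2 * pi * of_int n"
proof (rule ccontr)
  assume nc: "\<not> ?thesis"
  have "\<And>n::int. f 0 \<noteq> - al + pi + 2 * pi * of_int n" using nc by (auto simp: algebra_simps)
  then obtain n w where fw: "f 0 = - al + 2 * pi * of_int n + 2 * arctan w"
    using rep_arctan[of "f 0" "- al"] by (auto simp: algebra_simps)
  have feq: "f t = th1 n w t" for t
    by (rule uniq[OF sol th1_sol]) (simp add: fw th1_0)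
  have "w \<noteq> aa"
  proof
    assume "w = aa"
    hence "f 0 = al + 2 * pi * of_int n" using fw arctan_aa by simp
    thus False using nc by blast
  qed
  have "- Om * T < 0" using Om_pos T by (simp add: mult_pos_pos)
  hence "exp (- Om * T) < 1" by simp
  hence "exp (- Om * T) \<noteq> 1" by linarith
  hence "(w - aa) * exp (- Om * T) \<noteq> (w - aa) * 1" using \<open>w \<noteq> aa\<close> by (simp only: mult_left_cancel) simp
  hence "aa + (w - aa) * exp (- Om * T) \<noteq> w" by (simp only: mult_1_right)
  hence "arctan (aa + (w - aa) * exp (- Om * T)) \<noteq> arctan w" by (metis tan_arctan)
  hence ne: "f T - f 0 \<noteq> 0" using feq[of T] feq[of 0] by (simp add: th1_def)
  have "\<bar>f T - f 0\<bar> < 2 * pi" using feq[of T] feq[of 0] arctan_diff_bound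
    by (simp add: th1_def)
  hence "\<bar>of_int z\<bar> < (1::real)" using per pi_gt_zero by (simp add: abs_mult)
  hence "z = 0" by linarith
  thus False using ne per by simp
qed

lemma omega_sol:
  assumes sol: "\<And>t. (f has_real_derivative (A - B * sin (f t))) (at t)"
    and ne: "\<And>n::int. f 0 \<noteq> al + 2 * pi * of_int n \<and> f 0 \<noteq> pi - al + 2 * pi * of_int n"
  shows "\<exists>n::int. (f \<longlongrightarrow> al + 2 * pi * of_int n) at_top"
proof -
  have "\<And>n::int. f 0 \<noteq> - al + pi + 2 * pi * of_int n" using ne by (auto simp: algebra_simps)
  then obtain n w where fw: "f 0 = - al + 2 * pi * of_int n + 2 * arctan w"
    using rep_arctan[of "f 0" "- al"] by (auto simp: algebra_simps)
  have feq: "f = th1 n w"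
    by (rule ext, rule uniq[OF sol th1_sol]) (simp add: fw th1_0)
  thus ?thesis using th1_lim by blast
qed

lemma alpha_sol:
  assumes sol: "\<And>t. (f has_real_derivative (A - B * sin (f t))) (at t)"
    and ne: "\<And>n::int. f 0 \<noteq> al + 2 * pi * of_int n \<and> f 0 \<noteq> pi - al + 2 * pi * of_int n"
  shows "\<exists>n::int. (f \<longlongrightarrow> pi - al + 2 * pi * of_int n) at_bot"
proof -
  have "\<And>n::int. f 0 \<noteq> (al - pi) + pi + 2 * pi * of_int n" using ne by (auto simp: algebra_simps)
  then obtain n w where fw: "f 0 = (al - pi) + 2 * pi * of_int n + 2 * arctan w"
    using rep_arctan[of "f 0" "al - pi"] by blast
  have feq: "f = th2 n w"
    by (rule ext, rule uniq[OF sol th2_sol]) (simp add: fw th2_0)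
  have "- pi - al + 2 * pi * of_int n = pi - al + 2 * pi * of_int (n - 1)" by (simp add: algebra_simps)
  thus ?thesis using th2_lim[of n w] feq by metis
qed

end


lemma sqrt_div_aux: fixes x a :: real assumes "x > 0" shows "a * sqrt x / x = a / sqrt x"
proof -
  have "sqrt x * sqrt x = x" using assms by simp
  moreover have "sqrt x > 0" using assms by simp
  ultimately show ?thesis by (metis nonzero_mult_div_cancel_right times_divide_eq_right divide_divide_eq_left less_irrefl)
qed

lemma vd_fst: "(\<gamma> has_vector_derivative v) F \<Longrightarrow> ((\<lambda>t. fst (\<gamma> t)) has_real_derivative fst v) F"
  unfolding has_field_derivative_def has_vector_derivative_def
  by (drule has_derivative_fst) (erule has_derivative_eq_rhs; simp add: fun_eq_iff)
lemma vd_snd: "(\<gamma> has_vector_derivative v) F \<Longrightarrow> ((\<lambda>t. snd (\<gamma> t)) has_real_derivative snd v) F"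
  unfolding has_field_derivative_def has_vector_derivative_def
  by (drule has_derivative_snd) (erule has_derivative_eq_rhs; simp add: fun_eq_iff)

locale tor =
  fixes m k l :: nat
  assumes m1: "m \<ge> 1" and k1: "k \<ge> 1" and cop: "coprime k l"
begin

definition uf :: "real \<times> real \<Rightarrow> real" where "uf p = real l * snd p - real k * fst p"
definition line :: "real \<Rightarrow> (real \<times> real) set" where
  "line c = {p. \<exists>n::int. uf p = c + 2 * pi * of_int n}"

lemma uf_add: "uf (p + q) = uf p + uf q" by (simp add: uf_def algebra_simps)
lemma uf_diff: "uf (p - q) = uf p - uf q" by (simp add: uf_def algebra_simps)
lemma uf_lattice: "w \<in> lattice \<Longrightarrow> \<exists>z::int. uf w = 2 * pi * of_int z"
proof -
  assume "w \<in> lattice"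
  then obtain i j :: int where w: "w = (2 * pi * of_int i, 2 * pi * of_int j)" unfolding lattice_def by auto
  have "uf w = 2 * pi * of_int (int l * j - int k * i)" by (simp add: w uf_def algebra_simps)
  thus ?thesis by blast
qed

lemma bez: "\<exists>i j :: int. int l * j - int k * i = z"
proof -
  obtain u v :: int where "u * int k + v * int l = gcd (int k) (int l)" using bezout_int by blast
  moreover have "gcd (int k) (int l) = 1" using cop by (simp add: coprime_iff_gcd_eq_1)
  ultimately have uv: "u * int k + v * int l = 1" by simp
  have "int l * (v * z) - int k * (- u * z) = (u * int k + v * int l) * z" by (simp add: algebra_simps)
  hence "int l * (v * z) - int k * (- u * z) = z" using uv by simp
  thus ?thesis by blast
qed

lemma line_cos: "p \<in> line c \<longleftrightarrow> cos (uf p - c) = 1"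
proof -
  have "cos (uf p - c) = 1 \<longleftrightarrow> (\<exists>n::int. uf p - c = of_int n * 2 * pi)" by (rule cos_one_2pi_int)
  also have "\<dots> \<longleftrightarrow> p \<in> line c" unfolding line_def by (auto simp: algebra_simps)
  finally show ?thesis by simp
qed

lemma line_lattice: "p \<in> line c \<Longrightarrow> w \<in> lattice \<Longrightarrow> p + w \<in> line c"
proof -
  assume "p \<in> line c" "w \<in> lattice"
  then obtain n z :: int where "uf p = c + 2 * pi * of_int n" "uf w = 2 * pi * of_int z"
    using uf_lattice unfolding line_def by blast
  hence "uf (p + w) = c + 2 * pi * of_int (n + z)" by (simp add: uf_add algebra_simps)
  thus ?thesis unfolding line_def by blast
qed

lemma lattice_shift: "\<exists>w\<in>lattice. uf w = 2 * pi * of_int z"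
proof -
  obtain i j :: int where e: "int l * j - int k * i = z" using bez by blast
  define w where "w = (2 * pi * of_int i, 2 * pi * of_int j)"
  have "w \<in> lattice" unfolding lattice_def w_def by blast
  moreover have "uf w = 2 * pi * (real l * of_int j - real k * of_int i)" by (simp add: w_def uf_def algebra_simps)
  moreover have "real l * of_int j - real k * of_int i = of_int z" using e by (metis of_int_diff of_int_mult of_int_of_nat_eq)
  ultimately show ?thesis by auto
qed

lemma line_move: "p \<in> line c \<Longrightarrow> \<exists>w\<in>lattice. uf (p + w) = c"
proof -
  assume "p \<in> line c"
  then obtain n :: int where n: "uf p = c + 2 * pi * of_int n" unfolding line_def by blast
  obtain w where "w \<in> lattice" "uf w = 2 * pi * of_int (- n)" using lattice_shift by blast
  hence "uf (p + w) = c" using n by (simp add: uf_add)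
  thus ?thesis using \<open>w \<in> lattice\<close> by blast
qed

lemma kl_pos: "real k + real l \<ge> 1" using k1 by simp

lemma uf_lip: "\<bar>uf p - uf q\<bar> \<le> (real k + real l) * dist p q"
proof -
  obtain a b where p: "p = (a, b)" by force
  obtain c d where q: "q = (c, d)" by force
  have "\<bar>uf p - uf q\<bar> = \<bar>real l * (b - d) - real k * (a - c)\<bar>" by (simp add: p q uf_def algebra_simps)
  also have "\<dots> \<le> real l * \<bar>b - d\<bar> + real k * \<bar>a - c\<bar>"
    using abs_triangle_ineq4[of "real l * (b - d)" "real k * (a - c)"] by (simp add: abs_mult)
  also have "\<dots> \<le> real l * dist p q + real k * dist p q"
  proof -
    have "\<bar>b - d\<bar> \<le> dist p q" using dist_snd_le[of p q] by (simp add: p q dist_real_def)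
    hence 1: "real l * \<bar>b - d\<bar> \<le> real l * dist p q" by (simp add: mult_left_mono)
    have "\<bar>a - c\<bar> \<le> dist p q" using dist_fst_le[of p q] by (simp add: p q dist_real_def)
    hence 2: "real k * \<bar>a - c\<bar> \<le> real k * dist p q" by (simp add: mult_left_mono)
    show ?thesis using 1 2 by linarith
  qed
  finally show ?thesis by (simp add: algebra_simps)
qed

lemma infdist_line_upper:
  assumes "uf p = v + 2 * pi * of_int n"
  shows "infdist p (line c) \<le> \<bar>v - c\<bar>"
proof -
  define N where "N = real k ^ 2 + real l ^ 2"
  have N1: "N \<ge> 1" unfolding N_def using k1 by (simp add: add_increasing2 one_le_power)
  define s where "s = (c - v) / N"
  define q where "q = p + (- real k * s, real l * s)"
  have "uf q = uf p + s * N" by (simp add: q_def uf_add uf_def N_def power2_eq_square algebra_simps)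
  also have "s * N = c - v" using N1 by (simp add: s_def)
  finally have "uf q = c + 2 * pi * of_int n" using assms by simp
  hence "q \<in> line c" unfolding line_def by blast
  moreover have "dist p q \<le> \<bar>v - c\<bar>"
  proof -
    have "dist p q = norm (q - p)" by (simp add: dist_norm norm_minus_commute)
    also have "\<dots> = norm (- real k * s, real l * s)" by (simp add: q_def)
    also have "\<dots> = sqrt (s^2 * N)" by (simp add: norm_Pair N_def power_mult_distrib algebra_simps)
    also have "\<dots> = \<bar>s\<bar> * sqrt N" by (simp add: real_sqrt_mult)
    also have "\<dots> = \<bar>v - c\<bar> / sqrt N" using N1 sqrt_div_aux[of N "\<bar>v - c\<bar>"]
      by (simp add: s_def abs_minus_commute abs_divide)
    also have "\<dots> \<le> \<bar>v - c\<bar>"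
    proof -
      have "1 \<le> sqrt N" using N1 by simp
      hence "\<bar>v - c\<bar> * 1 \<le> \<bar>v - c\<bar> * sqrt N" by (intro mult_left_mono) auto
      thus ?thesis using N1 by (simp add: divide_le_eq)
    qed
    finally show ?thesis .
  qed
  ultimately show ?thesis by (rule infdist_le2)
qed

lemma infdist_line_lower:
  assumes "\<And>n::int. d \<le> \<bar>uf p - c - 2 * pi * of_int n\<bar>"
  shows "d / (real k + real l) \<le> infdist p (line c)"
proof -
  have "uf (- c / real k, 0) = c + 2 * pi * of_int 0" using k1 by (simp add: uf_def)
  hence "(- c / real k, 0) \<in> line c" unfolding line_def by blast
  hence ne: "line c \<noteq> {}" by auto
  show ?thesis unfolding infdist_notempty[OF ne]
  proof (rule cINF_greatest[OF ne])
    fix q assume "q \<in> line c"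
    then obtain n :: int where n: "uf q = c + 2 * pi * of_int n" unfolding line_def by blast
    have "d \<le> \<bar>uf p - uf q\<bar>" using assms[of n] n by (simp add: algebra_simps)
    also have "\<dots> \<le> (real k + real l) * dist p q" by (rule uf_lip)
    finally show "d / (real k + real l) \<le> dist p q" using kl_pos by (simp add: divide_le_eq mult.commute)
  qed
qed


lemma Yfield_eq: "Yfield m k l \<epsilon> p = (sin (real m * uf p), \<epsilon>)"
  by (cases p) (simp add: Yfield_def uf_def)

lemma sol_build:
  assumes "\<And>t. (th has_real_derivative (real m * real l * \<epsilon> - real m * real k * sin (th t))) (at t)"
  shows "is_sol (Yfield m k l \<epsilon>) (\<lambda>t. ((real l * (yy + \<epsilon> * t) - th t / real m) / real k, yy + \<epsilon> * t))"
  unfolding is_sol_def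
proof
  fix t
  let ?g = "\<lambda>t. ((real l * (yy + \<epsilon> * t) - th t / real m) / real k, yy + \<epsilon> * t)"
  have mk: "real m > 0" "real k > 0" using m1 k1 by auto
  have d1: "((\<lambda>t. (real l * (yy + \<epsilon> * t) - th t / real m) / real k) has_real_derivative
      (real l * \<epsilon> - (real m * real l * \<epsilon> - real m * real k * sin (th t)) / real m) / real k) (at t)"
    using mk by (auto intro!: derivative_eq_intros assms)
  have "(real l * \<epsilon> - (real m * real l * \<epsilon> - real m * real k * sin (th t)) / real m) / real k = sin (th t)"
    using mk by (simp add: field_simps)
  with d1 have d1': "((\<lambda>t. (real l * (yy + \<epsilon> * t) - th t / real m) / real k) has_vector_derivative sin (th t)) (at t)"
    by (simp add: has_real_derivative_iff_has_vector_derivative)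
  have "((\<lambda>t. yy + \<epsilon> * t) has_real_derivative \<epsilon>) (at t)"
    by (auto intro!: derivative_eq_intros)
  hence d2: "((\<lambda>t. yy + \<epsilon> * t) has_vector_derivative \<epsilon>) (at t)"
    by (simp add: has_real_derivative_iff_has_vector_derivative)
  have "real m * uf (?g t) = th t" using mk by (simp add: uf_def field_simps)
  hence "Yfield m k l \<epsilon> (?g t) = (sin (th t), \<epsilon>)" by (simp add: Yfield_eq)
  thus "(?g has_vector_derivative Yfield m k l \<epsilon> (?g t)) (at t)"
    using has_vector_derivative_Pair[OF d1' d2] by simp
qed

lemma sol_snd:
  assumes "is_sol (Yfield m k l \<epsilon>) \<gamma>"
  shows "snd (\<gamma> t) = snd (\<gamma> 0) + \<epsilon> * t"
proof -
  have d: "((\<lambda>t. snd (\<gamma> t)) has_real_derivative \<epsilon>) (at t)" for t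
    using vd_snd[OF assms[unfolded is_sol_def, rule_format, of t]] by (simp add: Yfield_eq)
  have "((\<lambda>t. snd (\<gamma> t) - \<epsilon> * t) has_real_derivative 0) (at t)" for t
    using d[of t] by (auto intro!: derivative_eq_intros)
  hence "snd (\<gamma> t) - \<epsilon> * t = snd (\<gamma> 0) - \<epsilon> * 0"
    using DERIV_isconst_all[of "\<lambda>t. snd (\<gamma> t) - \<epsilon> * t"] by blast
  thus ?thesis by simp
qed

lemma sol_theta:
  assumes "is_sol (Yfield m k l \<epsilon>) \<gamma>"
  shows "((\<lambda>t. real m * uf (\<gamma> t)) has_real_derivative
          (real m * real l * \<epsilon> - real m * real k * sin (real m * uf (\<gamma> t)))) (at t)"
proof -
  have v: "(\<gamma> has_vector_derivative (sin (real m * uf (\<gamma> t)), \<epsilon>)) (at t)"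
    using assms[unfolded is_sol_def, rule_format, of t] by (simp add: Yfield_eq)
  have "((\<lambda>t. real m * (real l * snd (\<gamma> t) - real k * fst (\<gamma> t))) has_real_derivative
      real m * (real l * \<epsilon> - real k * sin (real m * uf (\<gamma> t)))) (at t)"
    using vd_fst[OF v] vd_snd[OF v] by (auto intro!: derivative_eq_intros)
  thus ?thesis by (simp add: uf_def algebra_simps)
qed

lemma sol_shape:
  "\<gamma> t = ((real l * snd (\<gamma> t) - uf (\<gamma> t)) / real k, snd (\<gamma> t))"
  using k1 by (simp add: uf_def)


lemma lattice_mem: "(2 * pi * of_int i, 2 * pi * of_int j) \<in> lattice" unfolding lattice_def by blast
lemma lattice_add: "w \<in> lattice \<Longrightarrow> w' \<in> lattice \<Longrightarrow> w + w' \<in> lattice"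
  unfolding lattice_def by clarsimp (metis (no_types) distrib_left of_int_add)
lemma lattice_uminus: "w \<in> lattice \<Longrightarrow> - w \<in> lattice"
  unfolding lattice_def by clarsimp (metis mult_minus_right of_int_minus)
lemma lattice_zero: "0 \<in> lattice" using lattice_mem[of 0 0] by (simp add: zero_prod_def)
lemma lattice_diff: "w \<in> lattice \<Longrightarrow> w' \<in> lattice \<Longrightarrow> w - w' \<in> lattice"
  using lattice_add[OF _ lattice_uminus] by (simp add: diff_conv_add_uminus del: add_uminus_conv_diff)
lemma lattice_nat: "(2 * pi * real l * of_int N, 2 * pi * real k * of_int N) \<in> lattice"
proof -
  have "(2 * pi * real l * of_int N, 2 * pi * real k * of_int N) = (2 * pi * of_int (int l * N), 2 * pi * of_int (int k * N))"
    by simp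
  thus ?thesis using lattice_mem by metis
qed

lemma line_shift_eq: "line (c + 2 * pi * of_int q) = line c"
proof -
  have "(\<exists>n::int. uf p = c + 2 * pi * of_int q + 2 * pi * of_int n) \<longleftrightarrow> (\<exists>n::int. uf p = c + 2 * pi * of_int n)" for p
  proof
    assume "\<exists>n::int. uf p = c + 2 * pi * of_int q + 2 * pi * of_int n"
    then obtain n :: int where "uf p = c + 2 * pi * of_int q + 2 * pi * of_int n" by blast
    thus "\<exists>n::int. uf p = c + 2 * pi * of_int n" by (intro exI[of _ "q + n"]) (simp add: algebra_simps)
  next
    assume "\<exists>n::int. uf p = c + 2 * pi * of_int n"
    then obtain n :: int where "uf p = c + 2 * pi * of_int n" by blast
    thus "\<exists>n::int. uf p = c + 2 * pi * of_int q + 2 * pi * of_int n" by (intro exI[of _ "n - q"]) (simp add: algebra_simps)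
  qed
  thus ?thesis unfolding line_def by blast
qed

lemma line_idx: "\<exists>j\<in>{1..m}. line ((x + 2 * pi * of_int n) / real m) = line ((x + 2 * pi * (real j - 1)) / real m)"
proof -
  define j where "j = nat (n mod int m) + 1"
  have mpos: "int m > 0" using m1 by simp
  have r: "0 \<le> n mod int m" "n mod int m < int m" using mpos by auto
  hence j1: "j \<in> {1..m}" unfolding j_def by auto
  have "real j - 1 = of_int (n mod int m)" unfolding j_def using r by simp
  moreover have "n = int m * (n div int m) + n mod int m" by simp
  hence "of_int n = real m * of_int (n div int m) + of_int (n mod int m)"
    by (metis of_int_add of_int_mult of_int_of_nat_eq)
  ultimately have "(x + 2 * pi * of_int n) / real m = (x + 2 * pi * (real j - 1)) / real m + 2 * pi * of_int (n div int m)"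
    using m1 by (simp add: field_simps)
  hence "line ((x + 2 * pi * of_int n) / real m) = line ((x + 2 * pi * (real j - 1)) / real m)"
    by (simp add: line_shift_eq)
  thus ?thesis using j1 by blast
qed

lemma line_point: "((- c) / real k, 0) \<in> line c" "uf ((- c) / real k, 0) = c"
proof -
  show u: "uf ((- c) / real k, 0) = c" using k1 by (simp add: uf_def)
  hence "uf ((- c) / real k, 0) = c + 2 * pi * of_int 0" by simp
  thus "((- c) / real k, 0) \<in> line c" unfolding line_def by blast
qed

lemma teq_line: "teq p q \<Longrightarrow> q \<in> line c \<Longrightarrow> p \<in> line c"
  unfolding teq_def using line_lattice[of q c "p - q"] by simp

lemma timage:
  assumes e: "e > 0" and g: "\<And>t. \<gamma> t = ((real l * (yy + e * t) - v) / real k, yy + e * t)"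
  shows "torus_image \<gamma> {0..2 * pi * real k / e} = line v" "torus_image \<gamma> UNIV = line v"
proof -
  have sub: "torus_image \<gamma> I \<subseteq> line v" for I
  proof
    fix p assume "p \<in> torus_image \<gamma> I"
    then obtain t where "teq p (\<gamma> t)" unfolding torus_image_def by blast
    moreover have "uf (\<gamma> t) = v + 2 * pi * of_int 0" using g[of t] k1 by (simp add: uf_def)
    hence "\<gamma> t \<in> line v" unfolding line_def by blast
    ultimately show "p \<in> line v" by (rule teq_line)
  qed
  have sup: "line v \<subseteq> torus_image \<gamma> {0..2 * pi * real k / e}"
  proof
    fix p assume "p \<in> line v"
    then obtain w where w: "w \<in> lattice" "uf (p + w) = v" using line_move by blast
    define y' where "y' = snd (p + w)"
    have px: "fst (p + w) = (real l * y' - v) / real k" using w(2) k1 unfolding y'_def uf_def by (simp add: field_simps)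
    define N where "N = floor ((y' - yy) / (2 * pi * real k))"
    have kp: "2 * pi * real k > 0" using k1 by simp
    have N1: "of_int N \<le> (y' - yy) / (2 * pi * real k)" "(y' - yy) / (2 * pi * real k) < of_int N + 1"
      unfolding N_def by linarith+
    hence N1': "2 * pi * real k * of_int N \<le> y' - yy" "y' - yy < 2 * pi * real k * of_int N + 2 * pi * real k"
      using kp by (simp_all add: field_simps)
    define t where "t = (y' - 2 * pi * real k * of_int N - yy) / e"
    have "0 \<le> y' - 2 * pi * real k * of_int N - yy" "y' - 2 * pi * real k * of_int N - yy \<le> 2 * pi * real k"
      using N1' by linarith+
    hence tI: "t \<in> {0..2 * pi * real k / e}" unfolding t_def using e by (auto intro: divide_right_mono)
    have ty: "yy + e * t = y' - 2 * pi * real k * of_int N" unfolding t_def using e by simp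
    have "fst (\<gamma> t) = (real l * (y' - 2 * pi * real k * of_int N) - v) / real k" using g[of t] ty by simp
    also have "\<dots> = (real l * y' - v) / real k - 2 * pi * real l * of_int N" using k1 by (simp add: field_simps)
    finally have f1: "fst (\<gamma> t) = fst (p + w) - 2 * pi * real l * of_int N" using px by simp
    have s1: "snd (\<gamma> t) = snd (p + w) - 2 * pi * real k * of_int N" using g[of t] ty y'_def by simp
    have "\<gamma> t = (p + w) - (2 * pi * real l * of_int N, 2 * pi * real k * of_int N)"
      using f1 s1 by (simp add: prod_eq_iff)
    hence "p - \<gamma> t = (2 * pi * real l * of_int N, 2 * pi * real k * of_int N) - w" by simp
    hence "teq p (\<gamma> t)" unfolding teq_def using lattice_diff[OF lattice_nat w(1)] by simp
    thus "p \<in> torus_image \<gamma> {0..2 * pi * real k / e}" unfolding torus_image_def using tI by blast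
  qed
  show "torus_image \<gamma> {0..2 * pi * real k / e} = line v" using sub sup by blast
  have "torus_image \<gamma> {0..2 * pi * real k / e} \<subseteq> torus_image \<gamma> UNIV" unfolding torus_image_def by blast
  thus "torus_image \<gamma> UNIV = line v" using sub sup by blast
qed


definition alE :: "real \<Rightarrow> real" where "alE \<epsilon> = arcsin (real l * \<epsilon> / real k)"
definition um :: "nat \<Rightarrow> real \<Rightarrow> real" where "um i \<epsilon> = (2 * pi * (real i - 1) + alE \<epsilon>) / real m"
definition up :: "nat \<Rightarrow> real \<Rightarrow> real" where "up i \<epsilon> = (2 * pi * (real i - 1) + pi - alE \<epsilon>) / real m"
definition eqv :: "real \<Rightarrow> real \<Rightarrow> bool" where
  "eqv \<epsilon> v \<longleftrightarrow> (\<exists>n::int. real m * v = alE \<epsilon> + 2 * pi * of_int n \<or> real m * v = pi - alE \<epsilon> + 2 * pi * of_int n)"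
definition gam :: "real \<Rightarrow> real \<Rightarrow> real \<Rightarrow> real \<times> real" where
  "gam v \<epsilon> t = ((real l * (0 + \<epsilon> * t) - v) / real k, 0 + \<epsilon> * t)"

lemma scal_ok: "0 \<le> \<epsilon> \<Longrightarrow> real l * \<epsilon> < real k \<Longrightarrow> scal (real m * real l * \<epsilon>) (real m * real k)"
  using m1 by unfold_locales auto

lemma al_eq: "0 \<le> \<epsilon> \<Longrightarrow> real l * \<epsilon> < real k \<Longrightarrow> scal.al (real m * real l * \<epsilon>) (real m * real k) = alE \<epsilon>"
  using scal.al_def[OF scal_ok] unfolding alE_def using m1 by simp

lemma eqv_um: "eqv \<epsilon> (um i \<epsilon>)"
proof -
  have "real m * um i \<epsilon> = alE \<epsilon> + 2 * pi * of_int (int i - 1)" using m1 by (simp add: um_def)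
  thus ?thesis unfolding eqv_def by blast
qed
lemma eqv_up: "eqv \<epsilon> (up i \<epsilon>)"
proof -
  have "real m * up i \<epsilon> = 2 * pi * (real i - 1) + pi - alE \<epsilon>" using m1 by (simp add: up_def)
  also have "\<dots> = pi - alE \<epsilon> + 2 * pi * of_int (int i - 1)" by simp
  finally have "real m * up i \<epsilon> = pi - alE \<epsilon> + 2 * pi * of_int (int i - 1)" .
  thus ?thesis unfolding eqv_def by blast
qed

lemma eqv_zero:
  assumes "0 \<le> \<epsilon>" "real l * \<epsilon> < real k" "eqv \<epsilon> v"
  shows "real m * real l * \<epsilon> - real m * real k * sin (real m * v) = 0"
proof -
  interpret S: scal "real m * real l * \<epsilon>" "real m * real k" using scal_ok assms by blast
  obtain n :: int where "real m * v = alE \<epsilon> + 2 * pi * of_int n \<or> real m * v = pi - alE \<epsilon> + 2 * pi * of_int n"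
    using assms(3) unfolding eqv_def by blast
  hence "sin (real m * v) = sin (alE \<epsilon>)"
    by (metis sin_2pin sin_pi_minus)
  moreover have "real m * real k * sin (alE \<epsilon>) = real m * real l * \<epsilon>" using S.Bsin al_eq[OF assms(1,2)] by simp
  ultimately show ?thesis by (simp only:)
qed

lemma gam_sol:
  assumes "0 \<le> \<epsilon>" "real l * \<epsilon> < real k" "eqv \<epsilon> v"
  shows "is_sol (Yfield m k l \<epsilon>) (gam v \<epsilon>)"
proof -
  have "((\<lambda>t. real m * v) has_real_derivative (real m * real l * \<epsilon> - real m * real k * sin (real m * v))) (at t)" for t
    by (subst eqv_zero[OF assms]) (rule DERIV_const)
  from sol_build[of "\<lambda>t. real m * v", OF this, of 0] show ?thesis
    using m1 unfolding gam_def[abs_def] by simp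
qed

lemma gam_per: "\<epsilon> > 0 \<Longrightarrow> teq (gam v \<epsilon> (2 * pi * real k / \<epsilon>)) (gam v \<epsilon> 0)"
proof -
  assume e: "\<epsilon> > 0"
  have "gam v \<epsilon> (2 * pi * real k / \<epsilon>) - gam v \<epsilon> 0 = (2 * pi * real l * of_int 1, 2 * pi * real k * of_int 1)"
    using e k1 by (simp add: gam_def field_simps)
  thus ?thesis unfolding teq_def using lattice_nat by metis
qed

lemma gam_img: "\<epsilon> > 0 \<Longrightarrow> torus_image (gam v \<epsilon>) UNIV = line v"
  by (rule timage(2)[where yy = 0 and e = \<epsilon>]) (auto simp: gam_def)

lemma gam_F: "\<epsilon> \<noteq> 0 \<Longrightarrow> Yfield m k l \<epsilon> (gam v \<epsilon> 0) \<noteq> 0"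
  by (simp add: Yfield_eq zero_prod_def)

lemma periodic_line:
  assumes "0 < \<epsilon>" "real l * \<epsilon> < real k" "eqv \<epsilon> v"
  shows "periodic_orbit (Yfield m k l \<epsilon>) (line v)"
  unfolding periodic_orbit_def
proof (intro exI[of _ "gam v \<epsilon>"] exI[of _ "2 * pi * real k / \<epsilon>"] conjI)
  show "is_sol (Yfield m k l \<epsilon>) (gam v \<epsilon>)" using gam_sol[OF less_imp_le[OF assms(1)] assms(2,3)] .
  show "0 < 2 * pi * real k / \<epsilon>" using assms(1) k1 by simp
  show "teq (gam v \<epsilon> (2 * pi * real k / \<epsilon>)) (gam v \<epsilon> 0)" using gam_per[OF assms(1)] .
  show "Yfield m k l \<epsilon> (gam v \<epsilon> 0) \<noteq> 0" using gam_F assms(1) by simp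
  show "line v = torus_image (gam v \<epsilon>) UNIV" using gam_img[OF assms(1)] by simp
qed

lemma periodic_class:
  assumes e: "0 < \<epsilon>" "real l * \<epsilon> < real k" and po: "periodic_orbit (Yfield m k l \<epsilon>) Orb"
  shows "\<exists>v. eqv \<epsilon> v \<and> Orb = line v"
proof -
  interpret S: scal "real m * real l * \<epsilon>" "real m * real k" using scal_ok e by auto
  obtain \<gamma> T where g: "is_sol (Yfield m k l \<epsilon>) \<gamma>" "T > 0" "teq (\<gamma> T) (\<gamma> 0)" "Orb = torus_image \<gamma> UNIV"
    using po unfolding periodic_orbit_def by blast
  define th where "th t = real m * uf (\<gamma> t)" for t
  have ths: "(th has_real_derivative (real m * real l * \<epsilon> - real m * real k * sin (th t))) (at t)" for t
    unfolding th_def[abs_def] using sol_theta[OF g(1)] by simp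
  have "\<gamma> T - \<gamma> 0 \<in> lattice" using g(3) unfolding teq_def .
  then obtain z :: int where z: "uf (\<gamma> T - \<gamma> 0) = 2 * pi * of_int z" using uf_lattice by blast
  have hz: "uf (\<gamma> T) - uf (\<gamma> 0) = 2 * pi * of_int z" using z by (simp only: uf_diff)
  have "th T - th 0 = real m * (uf (\<gamma> T) - uf (\<gamma> 0))" unfolding th_def by (simp only: right_diff_distrib)
  also have "\<dots> = 2 * pi * of_int (int m * z)" unfolding hz by simp
  finally have "th T - th 0 = 2 * pi * of_int (int m * z)" .
  then obtain n :: int where "th 0 = S.al + 2 * pi * of_int n \<or> th 0 = pi - S.al + 2 * pi * of_int n"
    using S.periodic_equil[OF ths g(2)] by blast
  hence n: "th 0 = alE \<epsilon> + 2 * pi * of_int n \<or> th 0 = pi - alE \<epsilon> + 2 * pi * of_int n"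
    using al_eq[OF less_imp_le[OF e(1)] e(2)] by simp
  define v where "v = th 0 / real m"
  have "real m * v = th 0" using m1 by (simp add: v_def)
  hence ev: "eqv \<epsilon> v" unfolding eqv_def using n by metis
  have const: "th t = th 0" for t
  proof -
    have z: "real m * real l * \<epsilon> - real m * real k * sin (th 0) = 0"
      using eqv_zero[OF less_imp_le[OF e(1)] e(2) ev] m1 by (simp add: v_def)
    have dc: "((\<lambda>t. th 0) has_real_derivative (real m * real l * \<epsilon> - real m * real k * sin ((\<lambda>t. th 0) t))) (at t)" for t
      by (subst z) (rule DERIV_const)
    have "th t = (\<lambda>t. th 0) t" by (rule S.uniq[where f = th and g = "\<lambda>t. th 0", OF ths dc]) simp
    thus ?thesis by simp
  qed
  have hu: "uf (\<gamma> t) = v" for t using const[of t] m1 unfolding th_def v_def by (simp add: field_simps)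
  define yy where "yy = snd (\<gamma> 0)"
  have geq: "\<gamma> t = ((real l * (yy + \<epsilon> * t) - v) / real k, yy + \<epsilon> * t)" for t
  proof -
    have "\<gamma> t = ((real l * snd (\<gamma> t) - uf (\<gamma> t)) / real k, snd (\<gamma> t))" by (rule sol_shape)
    also have "\<dots> = ((real l * (yy + \<epsilon> * t) - v) / real k, yy + \<epsilon> * t)"
      using hu[of t] sol_snd[OF g(1), of t] unfolding yy_def by simp
    finally show ?thesis .
  qed
  have "torus_image \<gamma> UNIV = line v" by (rule timage(2)[OF e(1) geq])
  thus ?thesis using ev g(4) by blast
qed

lemma eqv_idx: "eqv \<epsilon> v \<Longrightarrow> \<exists>j\<in>{1..m}. line v = line (um j \<epsilon>) \<or> line v = line (up j \<epsilon>)"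
proof -
  assume "eqv \<epsilon> v"
  then obtain n :: int where n: "real m * v = alE \<epsilon> + 2 * pi * of_int n \<or> real m * v = pi - alE \<epsilon> + 2 * pi * of_int n"
    unfolding eqv_def by blast
  have vv: "v = (real m * v) / real m" using m1 by simp
  show ?thesis
  proof (cases "real m * v = alE \<epsilon> + 2 * pi * of_int n")
    case True
    then obtain j where "j \<in> {1..m}" "line v = line ((alE \<epsilon> + 2 * pi * (real j - 1)) / real m)"
      using line_idx[of "alE \<epsilon>" n] vv by metis
    thus ?thesis unfolding um_def by (auto simp: algebra_simps)
  next
    case False
    hence "real m * v = (pi - alE \<epsilon>) + 2 * pi * of_int n" using n by simp
    then obtain j where "j \<in> {1..m}" "line v = line ((pi - alE \<epsilon> + 2 * pi * (real j - 1)) / real m)"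
      using line_idx[of "pi - alE \<epsilon>" n] vv by metis
    thus ?thesis unfolding up_def by (auto simp: algebra_simps)
  qed
qed


lemma infdist_line_lower':
  assumes "p \<in> line v'" "\<And>n::int. d \<le> \<bar>v' - c - 2 * pi * of_int n\<bar>"
  shows "d / (real k + real l) \<le> infdist p (line c)"
proof (rule infdist_line_lower)
  fix n :: int
  obtain n1 :: int where n1: "uf p = v' + 2 * pi * of_int n1" using assms(1) unfolding line_def by blast
  have "uf p - c - 2 * pi * of_int n = v' - c - 2 * pi * of_int (n - n1)" using n1 by (simp add: algebra_simps)
  thus "d \<le> \<bar>uf p - c - 2 * pi * of_int n\<bar>" using assms(2)[of "n - n1"] by simp
qed

lemma int_abs_ge1: "(z::int) \<noteq> 0 \<Longrightarrow> 1 \<le> \<bar>real_of_int z\<bar>" by linarith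
lemma odd_abs_ge1: "1 \<le> \<bar>1 + 2 * real_of_int (z::int)\<bar>"
proof -
  have "1 \<le> \<bar>1 + 2 * z\<bar>" by presburger
  moreover have "\<bar>1 + 2 * real_of_int z\<bar> = real_of_int \<bar>1 + 2 * z\<bar>" by simp
  ultimately show ?thesis by linarith
qed

lemma sepA:
  assumes "real m * (v' - c) = x + pi + 2 * pi * of_int z" "\<bar>x\<bar> \<le> pi / 2"
  shows "pi / (2 * real m) \<le> \<bar>v' - c - 2 * pi * of_int n\<bar>"
proof -
  have mp: "real m > 0" using m1 by simp
  have e: "real m * (v' - c - 2 * pi * of_int n) = x + pi * (1 + 2 * of_int (z - int m * n))"
    using assms(1) by (simp add: algebra_simps)
  have h: "1 \<le> \<bar>1 + 2 * real_of_int (z - int m * n)\<bar>" by (rule odd_abs_ge1)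
  have "pi * 1 \<le> pi * \<bar>1 + 2 * real_of_int (z - int m * n)\<bar>" by (rule mult_left_mono[OF h]) simp
  hence "\<bar>pi * (1 + 2 * of_int (z - int m * n))\<bar> \<ge> pi" by (simp add: abs_mult)
  hence "pi / 2 \<le> \<bar>real m * (v' - c - 2 * pi * of_int n)\<bar>" unfolding e using assms(2) by linarith
  hence "pi / 2 \<le> real m * \<bar>v' - c - 2 * pi * of_int n\<bar>" using mp by (simp add: abs_mult)
  thus ?thesis using mp by (simp add: field_simps)
qed

lemma sepB:
  assumes "real m * (v' - c) = x + 2 * pi * of_int z" "\<bar>x\<bar> \<le> pi / 2"
  shows "line v' = line (c + x / real m) \<or> (\<forall>n::int. pi / (2 * real m) \<le> \<bar>v' - c - 2 * pi * of_int n\<bar>)"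
proof (cases "\<exists>n::int. z = int m * n")
  case True
  then obtain n where n: "z = int m * n" by blast
  have mp: "real m > 0" using m1 by simp
  have "v' = (c + x / real m) + 2 * pi * of_int n"
  proof -
    have "real m * v' = real m * ((c + x / real m) + 2 * pi * of_int n)"
      using assms(1) n mp by (simp add: algebra_simps)
    thus ?thesis using mp by simp
  qed
  thus ?thesis by (simp add: line_shift_eq)
next
  case False
  have "pi / (2 * real m) \<le> \<bar>v' - c - 2 * pi * of_int n\<bar>" for n :: int
  proof -
    have mp: "real m > 0" using m1 by simp
    have nz: "z - int m * n \<noteq> 0" using False by auto
    have e: "real m * (v' - c - 2 * pi * of_int n) = x + 2 * pi * of_int (z - int m * n)"
      using assms(1) by (simp add: algebra_simps)
    have "2 * pi * 1 \<le> 2 * pi * \<bar>real_of_int (z - int m * n)\<bar>" by (rule mult_left_mono[OF int_abs_ge1[OF nz]]) simp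
    hence "\<bar>2 * pi * of_int (z - int m * n)\<bar> \<ge> 2 * pi" by (simp add: abs_mult)
    hence "pi / 2 \<le> \<bar>real m * (v' - c - 2 * pi * of_int n)\<bar>" unfolding e using assms(2) by linarith
    hence "pi / 2 \<le> real m * \<bar>v' - c - 2 * pi * of_int n\<bar>" using mp by (simp add: abs_mult)
    thus ?thesis using mp by (simp add: field_simps)
  qed
  thus ?thesis by blast
qed

definition cm :: "nat \<Rightarrow> real" where "cm i = 2 * pi * (real i - 1) / real m"
definition cp :: "nat \<Rightarrow> real" where "cp i = (2 * pi * (real i - 1) + pi) / real m"

lemma Cminus_eq: "Cminus m k l i = line (cm i)"
  unfolding Cminus_def line_def cm_def uf_def by (auto simp: algebra_simps)
lemma Cplus_eq: "Cplus m k l i = line (cp i)"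
  unfolding Cplus_def line_def cp_def uf_def by (auto simp: algebra_simps)

lemma um_cm: "um i \<epsilon> = cm i + alE \<epsilon> / real m" unfolding um_def cm_def by (simp add: add_divide_distrib)
lemma up_cp: "up i \<epsilon> = cp i + (- alE \<epsilon>) / real m" unfolding up_def cp_def by (simp add: diff_divide_distrib)

definition good :: "real \<Rightarrow> bool" where
  "good \<epsilon> \<longleftrightarrow> 0 < \<epsilon> \<and> real l * \<epsilon> < real k \<and> alE \<epsilon> \<le> pi / (4 * (real k + real l))"

lemma good_al: "good \<epsilon> \<Longrightarrow> 0 \<le> alE \<epsilon> \<and> alE \<epsilon> \<le> pi / 4"
proof -
  assume g: "good \<epsilon>"
  hence "0 \<le> real l * \<epsilon> / real k" "real l * \<epsilon> / real k \<le> 1" using k1 unfolding good_def by auto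
  hence "0 \<le> alE \<epsilon>" unfolding alE_def using arcsin_le_arcsin[of 0 "real l * \<epsilon> / real k"] by simp
  moreover have "pi / (4 * (real k + real l)) \<le> pi / 4" using kl_pos by (intro divide_left_mono) auto
  moreover have "alE \<epsilon> \<le> pi / (4 * (real k + real l))" using g unfolding good_def by blast
  ultimately show ?thesis by linarith
qed

lemma sep_eqv:
  assumes g: "good \<epsilon>" and ev: "eqv \<epsilon> v'" and i: "v = um i \<epsilon> \<or> v = up i \<epsilon>"
  shows "line v' = line v \<or> (\<forall>n::int. pi / (2 * real m) \<le> \<bar>v' - v - 2 * pi * of_int n\<bar>)"
proof -
  have al: "0 \<le> alE \<epsilon>" "alE \<epsilon> \<le> pi / 4" using good_al[OF g] by auto
  have mp: "real m > 0" using m1 by simp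
  obtain n1 :: int where n1: "real m * v' = alE \<epsilon> + 2 * pi * of_int n1 \<or> real m * v' = pi - alE \<epsilon> + 2 * pi * of_int n1"
    using ev unfolding eqv_def by blast
  have mum: "real m * um i \<epsilon> = alE \<epsilon> + 2 * pi * (real i - 1)" using mp by (simp add: um_def)
  have mup: "real m * up i \<epsilon> = pi - alE \<epsilon> + 2 * pi * (real i - 1)" using mp by (simp add: up_def)
  have ri: "real i - 1 = of_int (int i - 1)" by simp
  consider (a) "v = um i \<epsilon>" "real m * v' = alE \<epsilon> + 2 * pi * of_int n1"
    | (b) "v = um i \<epsilon>" "real m * v' = pi - alE \<epsilon> + 2 * pi * of_int n1"
    | (c) "v = up i \<epsilon>" "real m * v' = alE \<epsilon> + 2 * pi * of_int n1"
    | (d) "v = up i \<epsilon>" "real m * v' = pi - alE \<epsilon> + 2 * pi * of_int n1"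
    using i n1 by blast
  thus ?thesis
  proof cases
    case a
    have "real m * (v' - v) = 0 + 2 * pi * of_int (n1 - (int i - 1))"
      using a mum unfolding ri by (simp add: algebra_simps)
    from sepB[OF this] show ?thesis by simp
  next
    case b
    have "real m * (v' - v) = (- 2 * alE \<epsilon>) + pi + 2 * pi * of_int (n1 - (int i - 1))"
      using b mum unfolding ri by (simp add: algebra_simps)
    from sepA[OF this] al show ?thesis by simp
  next
    case c
    have "real m * (v' - v) = (2 * alE \<epsilon>) + pi + 2 * pi * of_int (n1 - (int i - 1) - 1)"
      using c mup unfolding ri by (simp add: algebra_simps)
    from sepA[OF this] al show ?thesis by simp
  next
    case d
    have "real m * (v' - v) = 0 + 2 * pi * of_int (n1 - (int i - 1))"
      using d mup unfolding ri by (simp add: algebra_simps)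
    from sepB[OF this] show ?thesis by simp
  qed
qed

lemma sep_C:
  assumes g: "good \<epsilon>" and ev: "eqv \<epsilon> v'"
  shows "line v' = line (um i \<epsilon>) \<or> (\<forall>n::int. pi / (2 * real m) \<le> \<bar>v' - cm i - 2 * pi * of_int n\<bar>)"
    and "line v' = line (up i \<epsilon>) \<or> (\<forall>n::int. pi / (2 * real m) \<le> \<bar>v' - cp i - 2 * pi * of_int n\<bar>)"
proof -
  have al: "0 \<le> alE \<epsilon>" "alE \<epsilon> \<le> pi / 4" using good_al[OF g] by auto
  have mp: "real m > 0" using m1 by simp
  obtain n1 :: int where n1: "real m * v' = alE \<epsilon> + 2 * pi * of_int n1 \<or> real m * v' = pi - alE \<epsilon> + 2 * pi * of_int n1"
    using ev unfolding eqv_def by blast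
  have mcm: "real m * cm i = 2 * pi * (real i - 1)" using mp by (simp add: cm_def)
  have mcp: "real m * cp i = pi + 2 * pi * (real i - 1)" using mp by (simp add: cp_def)
  have ri: "real i - 1 = of_int (int i - 1)" by simp
  show "line v' = line (um i \<epsilon>) \<or> (\<forall>n::int. pi / (2 * real m) \<le> \<bar>v' - cm i - 2 * pi * of_int n\<bar>)"
  proof (cases "real m * v' = alE \<epsilon> + 2 * pi * of_int n1")
    case True
    have "real m * (v' - cm i) = alE \<epsilon> + 2 * pi * of_int (n1 - (int i - 1))"
      using True mcm unfolding ri by (simp add: algebra_simps)
    from sepB[OF this] al show ?thesis by (simp add: um_cm)
  next
    case False
    hence "real m * v' = pi - alE \<epsilon> + 2 * pi * of_int n1" using n1 by blast
    hence "real m * (v' - cm i) = (- alE \<epsilon>) + pi + 2 * pi * of_int (n1 - (int i - 1))"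
      using mcm unfolding ri by (simp add: algebra_simps)
    from sepA[OF this] al show ?thesis by simp
  qed
  show "line v' = line (up i \<epsilon>) \<or> (\<forall>n::int. pi / (2 * real m) \<le> \<bar>v' - cp i - 2 * pi * of_int n\<bar>)"
  proof (cases "real m * v' = alE \<epsilon> + 2 * pi * of_int n1")
    case True
    hence "real m * (v' - cp i) = alE \<epsilon> + pi + 2 * pi * of_int (n1 - (int i - 1) - 1)"
      using mcp unfolding ri by (simp add: algebra_simps)
    from sepA[OF this] al show ?thesis by simp
  next
    case False
    hence "real m * v' = pi - alE \<epsilon> + 2 * pi * of_int n1" using n1 by blast
    hence "real m * (v' - cp i) = (- alE \<epsilon>) + 2 * pi * of_int (n1 - (int i - 1))"
      using mcp unfolding ri by (simp add: algebra_simps)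
    from sepB[OF this] al show ?thesis by (simp add: up_cp)
  qed
qed


definition d0 :: real where "d0 = pi / (2 * real m) / (real k + real l)"

lemma d0_pos: "d0 > 0" unfolding d0_def using m1 kl_pos by simp

lemma good_basic: "good \<epsilon> \<Longrightarrow> 0 < \<epsilon> \<and> real l * \<epsilon> < real k" unfolding good_def by auto

lemma lc_line:
  assumes g: "good \<epsilon>" and i: "v = um i \<epsilon> \<or> v = up i \<epsilon>"
  shows "limit_cycle (Yfield m k l \<epsilon>) (line v)"
  unfolding limit_cycle_def
proof (intro conjI exI[of _ d0] allI impI)
  have ev: "eqv \<epsilon> v" using i eqv_um eqv_up by blast
  show "periodic_orbit (Yfield m k l \<epsilon>) (line v)" using periodic_line good_basic[OF g] ev by blast
  show "0 < d0" by (rule d0_pos)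
  fix Orb' assume "periodic_orbit (Yfield m k l \<epsilon>) Orb' \<and> Orb' \<noteq> line v"
  then obtain v' where v': "eqv \<epsilon> v'" "Orb' = line v'" "line v' \<noteq> line v"
    using periodic_class good_basic[OF g] by blast
  hence "\<forall>n::int. pi / (2 * real m) \<le> \<bar>v' - v - 2 * pi * of_int n\<bar>" using sep_eqv[OF g v'(1) i] by blast
  hence "d0 \<le> infdist ((- v') / real k, 0) (line v)"
    unfolding d0_def by (intro infdist_line_lower'[OF line_point(1)]) auto
  thus "\<exists>p\<in>Orb'. d0 \<le> infdist p (line v)" using v'(2) line_point(1) by blast
qed

lemma near_lines:
  assumes g: "good \<epsilon>"
  shows "line (um i \<epsilon>) \<subseteq> {p. infdist p (line (cm i)) < d0}"
    and "line (up i \<epsilon>) \<subseteq> {p. infdist p (line (cp i)) < d0}"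
proof -
  have al: "0 \<le> alE \<epsilon>" "alE \<epsilon> \<le> pi / (4 * (real k + real l))" using good_al[OF g] g unfolding good_def by auto
  have mp: "real m > 0" using m1 by simp
  have "alE \<epsilon> < pi / (2 * (real k + real l))"
  proof -
    have "pi / (4 * (real k + real l)) < pi / (2 * (real k + real l))" using kl_pos by (intro divide_strict_left_mono) auto
    thus ?thesis using al by linarith
  qed
  moreover have "d0 = (pi / (2 * (real k + real l))) / real m" unfolding d0_def by (simp add: field_simps)
  ultimately have lt: "alE \<epsilon> / real m < d0" using mp by (metis divide_strict_right_mono)
  show "line (um i \<epsilon>) \<subseteq> {p. infdist p (line (cm i)) < d0}"
  proof
    fix p assume "p \<in> line (um i \<epsilon>)"
    then obtain n :: int where "uf p = um i \<epsilon> + 2 * pi * of_int n" unfolding line_def by blast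
    hence "infdist p (line (cm i)) \<le> \<bar>um i \<epsilon> - cm i\<bar>" by (rule infdist_line_upper)
    also have "\<bar>um i \<epsilon> - cm i\<bar> = alE \<epsilon> / real m" using al mp by (simp add: um_cm)
    finally show "p \<in> {p. infdist p (line (cm i)) < d0}" using lt by simp
  qed
  show "line (up i \<epsilon>) \<subseteq> {p. infdist p (line (cp i)) < d0}"
  proof
    fix p assume "p \<in> line (up i \<epsilon>)"
    then obtain n :: int where "uf p = up i \<epsilon> + 2 * pi * of_int n" unfolding line_def by blast
    hence "infdist p (line (cp i)) \<le> \<bar>up i \<epsilon> - cp i\<bar>" by (rule infdist_line_upper)
    also have "\<bar>up i \<epsilon> - cp i\<bar> = alE \<epsilon> / real m" using al mp by (simp add: up_cp)
    finally show "p \<in> {p. infdist p (line (cp i)) < d0}" using lt by simp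
  qed
qed

lemma uniq_near:
  assumes g: "good \<epsilon>" and lc: "limit_cycle (Yfield m k l \<epsilon>) Orb"
  shows "Orb \<subseteq> {p. infdist p (line (cm i)) < d0} \<Longrightarrow> Orb = line (um i \<epsilon>)"
    and "Orb \<subseteq> {p. infdist p (line (cp i)) < d0} \<Longrightarrow> Orb = line (up i \<epsilon>)"
proof -
  obtain v' where v': "eqv \<epsilon> v'" "Orb = line v'"
    using periodic_class good_basic[OF g] lc unfolding limit_cycle_def by blast
  have pin: "((- v') / real k, 0) \<in> Orb" using v'(2) line_point(1) by blast
  show "Orb \<subseteq> {p. infdist p (line (cm i)) < d0} \<Longrightarrow> Orb = line (um i \<epsilon>)"
  proof (rule ccontr)
    assume sub: "Orb \<subseteq> {p. infdist p (line (cm i)) < d0}" and ne: "Orb \<noteq> line (um i \<epsilon>)"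
    hence "\<forall>n::int. pi / (2 * real m) \<le> \<bar>v' - cm i - 2 * pi * of_int n\<bar>" using sep_C(1)[OF g v'(1), of i] v'(2) by blast
    hence "d0 \<le> infdist ((- v') / real k, 0) (line (cm i))"
      unfolding d0_def by (intro infdist_line_lower'[OF line_point(1)]) auto
    thus False using sub pin by force
  qed
  show "Orb \<subseteq> {p. infdist p (line (cp i)) < d0} \<Longrightarrow> Orb = line (up i \<epsilon>)"
  proof (rule ccontr)
    assume sub: "Orb \<subseteq> {p. infdist p (line (cp i)) < d0}" and ne: "Orb \<noteq> line (up i \<epsilon>)"
    hence "\<forall>n::int. pi / (2 * real m) \<le> \<bar>v' - cp i - 2 * pi * of_int n\<bar>" using sep_C(2)[OF g v'(1), of i] v'(2) by blast
    hence "d0 \<le> infdist ((- v') / real k, 0) (line (cp i))"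
      unfolding d0_def by (intro infdist_line_lower'[OF line_point(1)]) auto
    thus False using sub pin by force
  qed
qed


lemma knot_line: "torus_knot k l (line v)"
  unfolding torus_knot_def
proof (intro exI[of _ "\<lambda>s. ((real l * (0 + real k * s) - v) / real k, 0 + real k * s)"] exI[of _ "2 * pi"] conjI ballI impI)
  let ?g = "\<lambda>s. ((real l * (0 + real k * s) - v) / real k, 0 + real k * s)"
  have kp: "real k > 0" using k1 by simp
  show "0 < 2 * pi" by simp
  show "continuous_on UNIV ?g" using kp by (intro continuous_intros) auto
  show "?g (2 * pi) = ?g 0 + (2 * pi * real l, 2 * pi * real k)" using kp by (simp add: field_simps)
  show "line v = torus_image ?g {0..2 * pi}"
    using timage(1)[of "real k" ?g 0 v] kp by simp
  fix s t assume st: "s \<in> {0..<2 * pi}" "t \<in> {0..<2 * pi}" and "teq (?g s) (?g t)"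
  then obtain i j :: int where ij: "?g s - ?g t = (2 * pi * of_int i, 2 * pi * of_int j)"
    unfolding teq_def lattice_def by blast
  have "fst (?g s - ?g t) = real l * (s - t)" using kp by (simp add: divide_simps algebra_simps)
  hence e1: "real l * (s - t) = 2 * pi * of_int i" using ij by simp
  have e2: "real k * (s - t) = 2 * pi * of_int j" using ij by (simp add: algebra_simps)
  obtain u w :: int where "u * int k + w * int l = gcd (int k) (int l)" using bezout_int by blast
  moreover have "gcd (int k) (int l) = 1" using cop by (simp add: coprime_iff_gcd_eq_1)
  ultimately have uw: "real_of_int u * real k + real_of_int w * real l = 1"
    by (metis of_int_1 of_int_add of_int_mult of_int_of_nat_eq)
  have "s - t = (real_of_int u * real k + real_of_int w * real l) * (s - t)" using uw by simp
  also have "\<dots> = real_of_int u * (real k * (s - t)) + real_of_int w * (real l * (s - t))" by (simp add: algebra_simps)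
  also have "\<dots> = 2 * pi * of_int (u * j + w * i)" using e1 e2 by (simp add: algebra_simps)
  finally have d: "s - t = 2 * pi * of_int (u * j + w * i)" .
  have "\<bar>s - t\<bar> < 2 * pi" using st by auto
  hence "\<bar>of_int (u * j + w * i)\<bar> < (1::real)" using d by (simp add: abs_mult)
  hence "u * j + w * i = 0" by linarith
  thus "s = t" using d by simp
qed

lemma gam0: "gam v \<epsilon> 0 = (- v / real k, 0)" by (simp add: gam_def)

lemma poincare_um:
  assumes g: "good \<epsilon>"
  shows "poincare_multiplier (Yfield m k l \<epsilon>) (line (um i \<epsilon>))
           (exp (- scal.Om (real m * real l * \<epsilon>) (real m * real k) * (2 * pi * real k / \<epsilon>)))"
proof -
  have e: "0 < \<epsilon>" "real l * \<epsilon> < real k" using good_basic[OF g] by auto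
  interpret S: scal "real m * real l * \<epsilon>" "real m * real k" using scal_ok e by auto
  have ale: "S.al = alE \<epsilon>" using al_eq e by simp
  define v where "v = um i \<epsilon>"
  have ev: "eqv \<epsilon> v" unfolding v_def by (rule eqv_um)
  have mk: "real m > 0" "real k > 0" using m1 k1 by auto
  have mv: "real m * v = S.al + 2 * pi * of_int (int i - 1)" unfolding v_def um_def using mk ale by simp
  define T where "T = 2 * pi * real k / \<epsilon>"
  have Tp: "T > 0" unfolding T_def using e mk by simp
  define c where "c = real m * real k / 2"
  define d where "d = (pi / 2 - S.al) / (real m * real k)"
  have dp: "d > 0" unfolding d_def using S.al_bounds mk by simp
  define X where "X s = S.th1 (int i - 1) (tan (S.al - c * s)) T" for s
  define gg where "gg s = (v - X s / real m) / real k" for s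
  show ?thesis
    unfolding poincare_multiplier_def
  proof (rule exI[of _ "gam v \<epsilon>"], rule exI[of _ T], rule exI[of _ "(1::real, 0::real)"], rule exI[of _ d],
      rule exI[of _ "\<lambda>s. T"], rule exI[of _ gg], intro conjI ballI)
    show "is_sol (Yfield m k l \<epsilon>) (gam v \<epsilon>)" using gam_sol[OF less_imp_le[OF e(1)] e(2) ev] .
    show "0 < T" by (rule Tp)
    show "teq (gam v \<epsilon> T) (gam v \<epsilon> 0)" unfolding T_def using gam_per[OF e(1)] .
    show "Yfield m k l \<epsilon> (gam v \<epsilon> 0) \<noteq> 0" using gam_F e by simp
    show "line (um i \<epsilon>) = torus_image (gam v \<epsilon>) UNIV" using gam_img[OF e(1)] v_def by simp
    show "fst (Yfield m k l \<epsilon> (gam v \<epsilon> 0)) * snd (1::real, 0::real) - snd (Yfield m k l \<epsilon> (gam v \<epsilon> 0)) * fst (1::real, 0::real) \<noteq> 0"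
      using e by (simp add: Yfield_eq)
    show "0 < d" using dp by simp
    show "continuous_on {- d<..<d} (\<lambda>s. T)" by (rule continuous_on_const)
    show "(\<lambda>s. T) 0 = T" by simp
    have "tan (S.al - c * 0) = S.aa" using S.tan_al by simp
    hence "X 0 = S.th1 (int i - 1) S.aa T" unfolding X_def by simp
    also have "\<dots> = S.al + 2 * pi * of_int (int i - 1)" using fun_cong[OF S.eq_sol1[of "int i - 1"], of T] by simp
    finally have X0: "X 0 = real m * v" using mv by simp
    show "gg 0 = 0" unfolding gg_def using X0 mk by simp
    have dX: "(X has_real_derivative (- 2 * c * exp (- S.Om * T))) (at 0)" unfolding X_def by (rule S.th1_deriv)
    have "(gg has_real_derivative ((0 - (- 2 * c * exp (- S.Om * T)) / real m) / real k)) (at 0)"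
      unfolding gg_def[abs_def] using mk by (auto intro!: derivative_eq_intros dX)
    moreover have "(0 - (- 2 * c * exp (- S.Om * T)) / real m) / real k = exp (- S.Om * T)"
      unfolding c_def using mk by (simp add: field_simps)
    ultimately show "(gg has_real_derivative exp (- S.Om * (2 * pi * real k / \<epsilon>))) (at 0)" unfolding T_def by simp
    fix s assume s: "s \<in> {- d<..<d}"
    define th where "th = S.th1 (int i - 1) (tan (S.al - c * s))"
    define psi where "psi t = ((real l * (0 + \<epsilon> * t) - th t / real m) / real k, 0 + \<epsilon> * t)" for t
    have sol: "is_sol (Yfield m k l \<epsilon>) psi"
      unfolding psi_def[abs_def] by (rule sol_build) (simp add: th_def S.th1_sol)
    have "\<bar>c * s\<bar> < (pi / 2 - S.al) / 2"
    proof -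
      have "\<bar>s\<bar> < d" using s by auto
      hence "\<bar>c * s\<bar> < c * d" using mk unfolding c_def by (simp add: abs_mult)
      also have "c * d = (pi / 2 - S.al) / 2" unfolding c_def d_def using mk by (simp add: field_simps)
      finally show ?thesis .
    qed
    hence rng: "- (pi / 2) < S.al - c * s" "S.al - c * s < pi / 2" using S.al_bounds by (auto simp: abs_less_iff)
    have th0: "th 0 = real m * v - 2 * c * s"
      unfolding th_def S.th1_0 using arctan_tan[OF rng] mv by simp
    have p0: "psi 0 = gam v \<epsilon> 0 + s *\<^sub>R (1, 0)"
      unfolding psi_def gam0 using th0 mk unfolding c_def by (simp add: field_simps)
    have "X s = th T" unfolding X_def th_def ..
    hence "psi T - (gam v \<epsilon> 0 + gg s *\<^sub>R (1, 0)) = (2 * pi * real l * of_int 1, 2 * pi * real k * of_int 1)"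
      unfolding psi_def gam0 gg_def T_def using mk e by (simp add: field_simps)
    hence pT: "teq (psi ((\<lambda>s. T) s)) (gam v \<epsilon> 0 + gg s *\<^sub>R (1, 0))" unfolding teq_def using lattice_nat by metis
    show "\<exists>\<psi>. is_sol (Yfield m k l \<epsilon>) \<psi> \<and> \<psi> 0 = gam v \<epsilon> 0 + s *\<^sub>R (1, 0) \<and>
              teq (\<psi> ((\<lambda>s. T) s)) (gam v \<epsilon> 0 + gg s *\<^sub>R (1, 0))"
      using sol p0 pT by blast
  qed
qed

lemma poincare_up:
  assumes g: "good \<epsilon>"
  shows "poincare_multiplier (Yfield m k l \<epsilon>) (line (up i \<epsilon>))
           (exp (scal.Om (real m * real l * \<epsilon>) (real m * real k) * (2 * pi * real k / \<epsilon>)))"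
proof -
  have e: "0 < \<epsilon>" "real l * \<epsilon> < real k" using good_basic[OF g] by auto
  interpret S: scal "real m * real l * \<epsilon>" "real m * real k" using scal_ok e by auto
  have ale: "S.al = alE \<epsilon>" using al_eq e by simp
  define v where "v = up i \<epsilon>"
  have ev: "eqv \<epsilon> v" unfolding v_def by (rule eqv_up)
  have mk: "real m > 0" "real k > 0" using m1 k1 by auto
  have mv: "real m * v = - pi - S.al + 2 * pi * of_int (int i)"
  proof -
    have "real m * v = 2 * pi * (real i - 1) + pi - alE \<epsilon>" unfolding v_def up_def using mk by simp
    thus ?thesis using ale by (simp add: algebra_simps)
  qed
  define T where "T = 2 * pi * real k / \<epsilon>"
  have Tp: "T > 0" unfolding T_def using e mk by simp
  define c where "c = real m * real k / 2"
  define d where "d = (pi / 2 - S.al) / (real m * real k)"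
  have dp: "d > 0" unfolding d_def using S.al_bounds mk by simp
  define X where "X s = S.th2 (int i) (tan (- S.al - c * s)) T" for s
  define gg where "gg s = (v - X s / real m) / real k" for s
  show ?thesis
    unfolding poincare_multiplier_def
  proof (rule exI[of _ "gam v \<epsilon>"], rule exI[of _ T], rule exI[of _ "(1::real, 0::real)"], rule exI[of _ d],
      rule exI[of _ "\<lambda>s. T"], rule exI[of _ gg], intro conjI ballI)
    show "is_sol (Yfield m k l \<epsilon>) (gam v \<epsilon>)" using gam_sol[OF less_imp_le[OF e(1)] e(2) ev] .
    show "0 < T" by (rule Tp)
    show "teq (gam v \<epsilon> T) (gam v \<epsilon> 0)" unfolding T_def using gam_per[OF e(1)] .
    show "Yfield m k l \<epsilon> (gam v \<epsilon> 0) \<noteq> 0" using gam_F e by simp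
    show "line (up i \<epsilon>) = torus_image (gam v \<epsilon>) UNIV" using gam_img[OF e(1)] v_def by simp
    show "fst (Yfield m k l \<epsilon> (gam v \<epsilon> 0)) * snd (1::real, 0::real) - snd (Yfield m k l \<epsilon> (gam v \<epsilon> 0)) * fst (1::real, 0::real) \<noteq> 0"
      using e by (simp add: Yfield_eq)
    show "0 < d" using dp by simp
    show "continuous_on {- d<..<d} (\<lambda>s. T)" by (rule continuous_on_const)
    show "(\<lambda>s. T) 0 = T" by simp
    have "tan (- S.al - c * 0) = - S.aa" using S.tan_al by simp
    hence "X 0 = S.th2 (int i) (- S.aa) T" unfolding X_def by simp
    also have "\<dots> = - pi - S.al + 2 * pi * of_int (int i)" by (rule S.eq_sol2)
    finally have X0: "X 0 = real m * v" using mv by simp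
    show "gg 0 = 0" unfolding gg_def using X0 mk by simp
    have dX: "(X has_real_derivative (- 2 * c * exp (S.Om * T))) (at 0)" unfolding X_def by (rule S.th2_deriv)
    have "(gg has_real_derivative ((0 - (- 2 * c * exp (S.Om * T)) / real m) / real k)) (at 0)"
      unfolding gg_def[abs_def] using mk by (auto intro!: derivative_eq_intros dX)
    moreover have "(0 - (- 2 * c * exp (S.Om * T)) / real m) / real k = exp (S.Om * T)"
      unfolding c_def using mk by (simp add: field_simps)
    ultimately show "(gg has_real_derivative exp (S.Om * (2 * pi * real k / \<epsilon>))) (at 0)" unfolding T_def by simp
    fix s assume s: "s \<in> {- d<..<d}"
    define th where "th = S.th2 (int i) (tan (- S.al - c * s))"
    define psi where "psi t = ((real l * (0 + \<epsilon> * t) - th t / real m) / real k, 0 + \<epsilon> * t)" for t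
    have sol: "is_sol (Yfield m k l \<epsilon>) psi"
      unfolding psi_def[abs_def] by (rule sol_build) (simp add: th_def S.th2_sol)
    have "\<bar>c * s\<bar> < (pi / 2 - S.al) / 2"
    proof -
      have "\<bar>s\<bar> < d" using s by auto
      hence "\<bar>c * s\<bar> < c * d" using mk unfolding c_def by (simp add: abs_mult)
      also have "c * d = (pi / 2 - S.al) / 2" unfolding c_def d_def using mk by (simp add: field_simps)
      finally show ?thesis .
    qed
    hence rng: "- (pi / 2) < - S.al - c * s" "- S.al - c * s < pi / 2" using S.al_bounds by (auto simp: abs_less_iff)
    have th0: "th 0 = real m * v - 2 * c * s"
      unfolding th_def S.th2_0 using arctan_tan[OF rng] mv by simp
    have p0: "psi 0 = gam v \<epsilon> 0 + s *\<^sub>R (1, 0)"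
      unfolding psi_def gam0 using th0 mk unfolding c_def by (simp add: field_simps)
    have "X s = th T" unfolding X_def th_def ..
    hence "psi T - (gam v \<epsilon> 0 + gg s *\<^sub>R (1, 0)) = (2 * pi * real l * of_int 1, 2 * pi * real k * of_int 1)"
      unfolding psi_def gam0 gg_def T_def using mk e by (simp add: field_simps)
    hence pT: "teq (psi ((\<lambda>s. T) s)) (gam v \<epsilon> 0 + gg s *\<^sub>R (1, 0))" unfolding teq_def using lattice_nat by metis
    show "\<exists>\<psi>. is_sol (Yfield m k l \<epsilon>) \<psi> \<and> \<psi> 0 = gam v \<epsilon> 0 + s *\<^sub>R (1, 0) \<and>
              teq (\<psi> ((\<lambda>s. T) s)) (gam v \<epsilon> 0 + gg s *\<^sub>R (1, 0))"
      using sol p0 pT by blast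
  qed
qed


lemma alE_tendsto: "(alE \<longlongrightarrow> 0) (at_right 0)"
proof -
  have "((\<lambda>\<epsilon>. real l * \<epsilon> / real k) \<longlongrightarrow> real l * 0 / real k) (at_right 0)"
    using k1 by (intro tendsto_intros) auto
  hence "((\<lambda>\<epsilon>. arcsin (real l * \<epsilon> / real k)) \<longlongrightarrow> arcsin 0) (at_right 0)"
    using isCont_tendsto_compose[OF isCont_arcsin[of 0]] by simp
  thus ?thesis unfolding alE_def[abs_def] by simp
qed

lemma alE_small: "e > 0 \<Longrightarrow> eventually (\<lambda>\<epsilon>. \<bar>alE \<epsilon>\<bar> < e) (at_right 0)"
  using tendstoD[OF alE_tendsto] by (simp add: dist_real_def)

lemma good_ex: "\<exists>\<epsilon>0>0. \<forall>\<epsilon>. 0 < \<epsilon> \<and> \<epsilon> \<le> \<epsilon>0 \<longrightarrow> good \<epsilon>"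
proof -
  define b where "b = pi / (4 * (real k + real l))"
  have b1: "0 < b" unfolding b_def using kl_pos by simp
  have "b \<le> pi / 4" unfolding b_def using kl_pos by (intro divide_left_mono) auto
  note b = b1 this
  define \<sigma> where "\<sigma> = sin b"
  have \<sigma>1: "0 < \<sigma>" unfolding \<sigma>_def using b by (intro sin_gt_zero) auto
  have "\<sigma> \<le> \<bar>b\<bar>" unfolding \<sigma>_def using abs_sin_x_le_abs_x[of b] by linarith
  moreover have "\<bar>b\<bar> < 1" using b pi_less_4 by simp
  ultimately have \<sigma>: "0 < \<sigma>" "\<sigma> < 1" using \<sigma>1 by auto
  show ?thesis
  proof (intro exI[of _ "real k * \<sigma> / (real l + 1)"] conjI allI impI)
    show "0 < real k * \<sigma> / (real l + 1)" using \<sigma> k1 by simp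
    fix \<epsilon> assume e: "0 < \<epsilon> \<and> \<epsilon> \<le> real k * \<sigma> / (real l + 1)"
    have kp: "real k > 0" using k1 by simp
    have "real l * \<epsilon> \<le> real l * (real k * \<sigma> / (real l + 1))" using e by (intro mult_left_mono) auto
    also have "\<dots> \<le> real k * \<sigma>"
    proof -
      have "real l / (real l + 1) \<le> 1" by simp
      hence "real l / (real l + 1) * (real k * \<sigma>) \<le> 1 * (real k * \<sigma>)" using \<sigma> kp by (intro mult_right_mono) auto
      thus ?thesis by (simp add: field_simps)
    qed
    finally have le: "real l * \<epsilon> \<le> real k * \<sigma>" .
    hence q: "real l * \<epsilon> / real k \<le> \<sigma>" using kp by (simp add: divide_le_eq mult.commute)
    have "real k * \<sigma> < real k * 1" using \<sigma> kp by (intro mult_strict_left_mono) auto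
    hence "real l * \<epsilon> < real k" using le by simp
    moreover have "alE \<epsilon> \<le> b"
    proof -
      have "0 \<le> real l * \<epsilon> / real k" using e kp by simp
      hence "alE \<epsilon> \<le> arcsin \<sigma>" unfolding alE_def using q \<sigma> by (intro arcsin_le_arcsin) auto
      also have "arcsin \<sigma> = b" unfolding \<sigma>_def using b by (intro arcsin_sin) auto
      finally show ?thesis .
    qed
    ultimately show "good \<epsilon>" unfolding good_def b_def using e by auto
  qed
qed

lemma Y0_deriv: "(Yfield m k l 0 has_derivative (\<lambda>h. (cos (real m * uf p) * (real m * uf h), 0))) (at p)"
proof -
  have f: "Yfield m k l 0 = (\<lambda>q. (sin (real m * (real l * snd q - real k * fst q)), 0))"
    by (auto simp: fun_eq_iff Yfield_eq uf_def)
  have u: "((\<lambda>q. real m * (real l * snd q - real k * fst q)) has_derivative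
      (\<lambda>h. real m * (real l * snd h - real k * fst h))) (at p)"
    by (intro has_derivative_mult_right has_derivative_diff has_derivative_snd has_derivative_fst has_derivative_ident)
  have s: "((\<lambda>q. sin (real m * (real l * snd q - real k * fst q))) has_derivative
      (\<lambda>h. real m * (real l * snd h - real k * fst h) * cos (real m * (real l * snd p - real k * fst p)))) (at p)"
    by (rule DERIV_compose_FDERIV[OF DERIV_sin u])
  have "((\<lambda>q. (sin (real m * (real l * snd q - real k * fst q)), 0::real)) has_derivative
      (\<lambda>h. (real m * (real l * snd h - real k * fst h) * cos (real m * (real l * snd p - real k * fst p)), 0))) (at p)"
    by (rule has_derivative_Pair[OF s has_derivative_const])
  thus ?thesis unfolding f by (rule has_derivative_eq_rhs) (auto simp: fun_eq_iff uf_def)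
qed

lemma NR_char:
  assumes "normally_repelling (Yfield m k l 0) p"
  shows "\<exists>z::int. real m * uf p = pi + 2 * pi * of_int z"
proof -
  obtain D where D: "Yfield m k l 0 p = 0" "(Yfield m k l 0 has_derivative D) (at p)"
    "\<exists>w c. w \<noteq> 0 \<and> c > 0 \<and> D w = c *\<^sub>R w"
    using assms unfolding normally_repelling_def by blast
  have DD: "D = (\<lambda>h. (cos (real m * uf p) * (real m * uf h), 0))"
    using has_derivative_unique[OF D(2) Y0_deriv] .
  obtain w c where wc: "w \<noteq> 0" "c > 0" "D w = c *\<^sub>R w" using D(3) by blast
  have s2: "snd w = 0" using wc(2,3) unfolding DD by (auto simp: prod_eq_iff)
  hence f1: "fst w \<noteq> 0" using wc(1) by (auto simp: prod_eq_iff)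
  have "cos (real m * uf p) * (real m * (- real k * fst w)) = c * fst w"
    using wc(3) s2 unfolding DD uf_def by (simp add: prod_eq_iff)
  hence "(- (cos (real m * uf p) * (real m * real k))) * fst w = c * fst w" by (simp add: algebra_simps)
  hence ceq: "- (cos (real m * uf p) * (real m * real k)) = c" by (rule iffD1[OF mult_right_cancel[OF f1]])
  have mkp: "real m * real k > 0" using m1 k1 by simp
  have "cos (real m * uf p) * (real m * real k) < 0" using ceq wc(2) by linarith
  hence cn: "cos (real m * uf p) < 0" using mkp by (simp add: mult_less_0_iff)
  have sn: "sin (real m * uf p) = 0" using D(1) by (simp add: Yfield_eq zero_prod_def)
  hence "(cos (real m * uf p))^2 = 1" using sin_cos_squared_add[of "real m * uf p"] by simp
  hence "cos (real m * uf p) = 1 \<or> cos (real m * uf p) = -1" by (simp add: power2_eq_1_iff)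
  hence "cos (real m * uf p) = -1" using cn by auto
  hence "cos (real m * uf p + pi) = 1" by simp
  then obtain n :: int where "real m * uf p + pi = of_int n * 2 * pi" using cos_one_2pi_int by blast
  hence "real m * uf p = pi + 2 * pi * of_int (n - 1)" by (simp add: algebra_simps)
  thus ?thesis by blast
qed

lemma NR_point: "normally_repelling (Yfield m k l 0) ((- cp i) / real k, 0)"
proof -
  let ?p = "((- cp i) / real k, 0)"
  have u: "uf ?p = cp i" by (rule line_point(2))
  have cosv: "cos (real m * uf ?p) = -1"
  proof -
    have "real m * uf ?p = pi + 2 * pi * (real i - 1)" using u m1 by (simp add: cp_def)
    hence "real m * uf ?p = pi + 2 * pi * of_int (int i - 1)" by simp
    thus ?thesis by (simp only: cos_2pin) simp
  qed
  have sinv: "sin (real m * uf ?p) = 0"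
  proof -
    have "real m * uf ?p = pi + 2 * pi * (real i - 1)" using u m1 by (simp add: cp_def)
    hence "real m * uf ?p = pi + 2 * pi * of_int (int i - 1)" by simp
    thus ?thesis by (simp only: sin_2pin) simp
  qed
  show ?thesis unfolding normally_repelling_def
  proof (intro conjI exI[of _ "\<lambda>h. (cos (real m * uf ?p) * (real m * uf h), 0)"])
    show "Yfield m k l 0 ?p = 0" using sinv by (simp add: Yfield_eq zero_prod_def)
    show "(Yfield m k l 0 has_derivative (\<lambda>h. (cos (real m * uf ?p) * (real m * uf h), 0))) (at ?p)" by (rule Y0_deriv)
    show "\<exists>v. v \<noteq> 0 \<and> (cos (real m * uf ?p) * (real m * uf v), 0) = 0"
      using k1 by (intro exI[of _ "(real l, real k)"]) (simp add: uf_def zero_prod_def)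
    show "\<exists>w c. w \<noteq> 0 \<and> 0 < c \<and> (cos (real m * uf ?p) * (real m * uf w), 0) = c *\<^sub>R w"
      using k1 m1 cosv by (intro exI[of _ "(1, 0)"] exI[of _ "real m * real k"]) (simp add: uf_def zero_prod_def)
  qed
qed


lemma ev_good: "eventually good (at_right 0)"
proof -
  obtain e0 where e0: "e0 > 0" "\<forall>\<epsilon>. 0 < \<epsilon> \<and> \<epsilon> \<le> e0 \<longrightarrow> good \<epsilon>" using good_ex by blast
  show ?thesis unfolding eventually_at_right_field using e0 by (intro exI[of _ e0]) auto
qed

lemma dist_line_line:
  assumes "p \<in> line v" shows "infdist p (line c) \<le> \<bar>v - c\<bar>"
proof -
  obtain n :: int where "uf p = v + 2 * pi * of_int n" using assms unfolding line_def by blast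
  thus ?thesis by (rule infdist_line_upper)
qed

lemma haus:
  "hausdorff_tendsto (\<lambda>\<epsilon>. line (um i \<epsilon>)) (line (cm i))"
  "hausdorff_tendsto (\<lambda>\<epsilon>. line (up i \<epsilon>)) (line (cp i))"
proof -
  have mp: "real m > 0" using m1 by simp
  have ev: "eventually (\<lambda>\<epsilon>. \<bar>alE \<epsilon>\<bar> / real m < e) (at_right 0)" if "e > 0" for e
  proof -
    have "eventually (\<lambda>\<epsilon>. \<bar>alE \<epsilon>\<bar> < e * real m) (at_right 0)" using alE_small that mp by simp
    thus ?thesis by eventually_elim (use mp in \<open>simp add: divide_less_eq\<close>)
  qed
  show "hausdorff_tendsto (\<lambda>\<epsilon>. line (um i \<epsilon>)) (line (cm i))"
    unfolding hausdorff_tendsto_def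
  proof (intro allI impI)
    fix e :: real assume "e > 0"
    from ev[OF this] show "eventually (\<lambda>\<epsilon>. (\<forall>p\<in>line (um i \<epsilon>). infdist p (line (cm i)) < e) \<and>
          (\<forall>q\<in>line (cm i). infdist q (line (um i \<epsilon>)) < e)) (at_right 0)"
    proof eventually_elim
      case (elim \<epsilon>)
      have d: "\<bar>um i \<epsilon> - cm i\<bar> = \<bar>alE \<epsilon>\<bar> / real m" using mp by (simp add: um_cm abs_divide)
      show ?case
      proof (intro conjI ballI)
        fix p assume "p \<in> line (um i \<epsilon>)"
        hence "infdist p (line (cm i)) \<le> \<bar>um i \<epsilon> - cm i\<bar>" by (rule dist_line_line)
        thus "infdist p (line (cm i)) < e" using d elim by linarith
      next
        fix q assume "q \<in> line (cm i)"
        hence "infdist q (line (um i \<epsilon>)) \<le> \<bar>cm i - um i \<epsilon>\<bar>" by (rule dist_line_line)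
        thus "infdist q (line (um i \<epsilon>)) < e" using d elim abs_minus_commute[of "cm i" "um i \<epsilon>"] by linarith
      qed
    qed
  qed
  show "hausdorff_tendsto (\<lambda>\<epsilon>. line (up i \<epsilon>)) (line (cp i))"
    unfolding hausdorff_tendsto_def
  proof (intro allI impI)
    fix e :: real assume "e > 0"
    from ev[OF this] show "eventually (\<lambda>\<epsilon>. (\<forall>p\<in>line (up i \<epsilon>). infdist p (line (cp i)) < e) \<and>
          (\<forall>q\<in>line (cp i). infdist q (line (up i \<epsilon>)) < e)) (at_right 0)"
    proof eventually_elim
      case (elim \<epsilon>)
      have d: "\<bar>up i \<epsilon> - cp i\<bar> = \<bar>alE \<epsilon>\<bar> / real m" using mp by (simp add: up_cp abs_divide)
      show ?case
      proof (intro conjI ballI)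
        fix p assume "p \<in> line (up i \<epsilon>)"
        hence "infdist p (line (cp i)) \<le> \<bar>up i \<epsilon> - cp i\<bar>" by (rule dist_line_line)
        thus "infdist p (line (cp i)) < e" using d elim by linarith
      next
        fix q assume "q \<in> line (cp i)"
        hence "infdist q (line (up i \<epsilon>)) \<le> \<bar>cp i - up i \<epsilon>\<bar>" by (rule dist_line_line)
        thus "infdist q (line (up i \<epsilon>)) < e" using d elim abs_minus_commute[of "cp i" "up i \<epsilon>"] by linarith
      qed
    qed
  qed
qed

lemma canard_up: "canard_family (Yfield m k l 0) (\<lambda>\<epsilon>. line (up i \<epsilon>))"
  unfolding canard_family_def
proof (intro exI[of _ "(- cp i / real k, 0)"] exI[of _ "pi / real m / (real k + real l)"] conjI allI impI)
  let ?a = "(- cp i / real k, 0::real)"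
  have mp: "real m > 0" using m1 by simp
  show "0 < pi / real m / (real k + real l)" using mp kl_pos by simp
  show "normally_repelling (Yfield m k l 0) ?a" using NR_point by simp
  fix e :: real assume "e > 0"
  have "eventually (\<lambda>\<epsilon>. \<bar>alE \<epsilon>\<bar> < e * real m) (at_right 0)" using alE_small \<open>e > 0\<close> mp by simp
  thus "eventually (\<lambda>\<epsilon>. \<forall>b. b \<in> ball ?a (pi / real m / (real k + real l)) \<and> normally_repelling (Yfield m k l 0) b \<longrightarrow>
          infdist b (line (up i \<epsilon>)) < e) (at_right 0)"
  proof eventually_elim
    case (elim \<epsilon>)
    show ?case
    proof (intro allI impI, elim conjE)
      fix b assume bb: "b \<in> ball ?a (pi / real m / (real k + real l))" and nr: "normally_repelling (Yfield m k l 0) b"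
      obtain z :: int where z: "real m * uf b = pi + 2 * pi * of_int z" using NR_char[OF nr] by blast
      have ua: "uf ?a = cp i" using line_point(2) by simp
      have "\<bar>uf ?a - uf b\<bar> \<le> (real k + real l) * dist ?a b" by (rule uf_lip)
      also have "\<dots> < (real k + real l) * (pi / real m / (real k + real l))" using bb kl_pos by (intro mult_strict_left_mono) auto
      also have "\<dots> = pi / real m" using kl_pos by simp
      finally have "\<bar>uf ?a - uf b\<bar> < pi / real m" .
      hence "real m * \<bar>uf ?a - uf b\<bar> < pi" using mp by (simp add: field_simps)
      hence lt: "\<bar>real m * uf ?a - real m * uf b\<bar> < pi" using mp by (simp add: abs_mult right_diff_distrib[symmetric])
      have "real m * uf ?a = pi + 2 * pi * (real i - 1)" using ua mp by (simp add: cp_def)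
      hence "real m * uf ?a - real m * uf b = 2 * pi * of_int (int i - 1 - z)" using z by (simp add: algebra_simps)
      hence "\<bar>2 * pi * of_int (int i - 1 - z)\<bar> < pi" using lt by simp
      hence "\<bar>real_of_int (int i - 1 - z)\<bar> < 1" by (simp add: abs_mult)
      hence "int i - 1 - z = 0" by linarith
      hence "real m * uf b = real m * uf ?a" using z \<open>real m * uf ?a = pi + 2 * pi * (real i - 1)\<close> by simp
      hence ub: "uf b = cp i" using mp ua by simp
      have "infdist b (line (up i \<epsilon>)) \<le> \<bar>cp i - up i \<epsilon>\<bar>" by (rule infdist_line_upper[of b _ 0]) (simp add: ub)
      also have "\<bar>cp i - up i \<epsilon>\<bar> = \<bar>alE \<epsilon>\<bar> / real m" using mp by (simp add: up_cp abs_divide)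
      also have "\<dots> < e" using elim mp by (simp add: divide_less_eq)
      finally show "infdist b (line (up i \<epsilon>)) < e" .
    qed
  qed
qed

lemma not_canard_um: "\<not> canard_family (Yfield m k l 0) (\<lambda>\<epsilon>. line (um i \<epsilon>))"
proof
  assume "canard_family (Yfield m k l 0) (\<lambda>\<epsilon>. line (um i \<epsilon>))"
  then obtain a r where ar: "r > 0" "normally_repelling (Yfield m k l 0) a"
    "\<forall>e>0. eventually (\<lambda>\<epsilon>. \<forall>b. b \<in> ball a r \<and> normally_repelling (Yfield m k l 0) b \<longrightarrow>
          infdist b (line (um i \<epsilon>)) < e) (at_right 0)"
    unfolding canard_family_def by blast
  have ev1: "eventually (\<lambda>\<epsilon>. \<forall>b. b \<in> ball a r \<and> normally_repelling (Yfield m k l 0) b \<longrightarrow>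
          infdist b (line (um i \<epsilon>)) < d0) (at_right 0)" using ar(3) d0_pos by blast
  have "eventually (\<lambda>\<epsilon>. good \<epsilon> \<and> infdist a (line (um i \<epsilon>)) < d0) (at_right 0)"
    using ev_good ev1
  proof eventually_elim
    case (elim \<epsilon>)
    have "a \<in> ball a r" using ar(1) by simp
    thus ?case using elim ar(2) by blast
  qed
  then obtain \<epsilon> where \<epsilon>: "good \<epsilon>" "infdist a (line (um i \<epsilon>)) < d0"
    using eventually_happens[of _ "at_right (0::real)"] by auto
  obtain z :: int where z: "real m * uf a = pi + 2 * pi * of_int z" using NR_char[OF ar(2)] by blast
  have al: "0 \<le> alE \<epsilon>" "alE \<epsilon> \<le> pi / 4" using good_al[OF \<epsilon>(1)] by auto
  have mp: "real m > 0" using m1 by simp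
  have mum: "real m * um i \<epsilon> = alE \<epsilon> + 2 * pi * (real i - 1)" using mp by (simp add: um_def)
  have "real m * (uf a - um i \<epsilon>) = (- alE \<epsilon>) + pi + 2 * pi * of_int (z - (int i - 1))"
    using z mum by (simp add: algebra_simps)
  moreover have "\<bar>- alE \<epsilon>\<bar> \<le> pi / 2" using al by simp
  ultimately have "\<And>n::int. pi / (2 * real m) \<le> \<bar>uf a - um i \<epsilon> - 2 * pi * of_int n\<bar>"
    by (rule sepA)
  hence "d0 \<le> infdist a (line (um i \<epsilon>))" unfolding d0_def by (rule infdist_line_lower)
  thus False using \<epsilon>(2) by simp
qed


definition Phi :: "real \<Rightarrow> real \<times> real \<Rightarrow> real" where "Phi v p = cos (uf p - v)"

lemma Phi_lattice: "w \<in> lattice \<Longrightarrow> Phi v (q + w) = Phi v q"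
proof -
  assume "w \<in> lattice"
  then obtain z :: int where z: "uf w = 2 * pi * of_int z" using uf_lattice by blast
  have "uf (q + w) - v = (uf q - v) + 2 * pi * of_int z" using z by (simp add: uf_add)
  thus ?thesis unfolding Phi_def by (simp only: cos_2pin)
qed

lemma Phi_lip: "\<bar>Phi v p - Phi v q\<bar> \<le> (real k + real l) * tdist p q"
proof -
  let ?S = "{q + w | w. w \<in> lattice}"
  have ne: "?S \<noteq> {}" using lattice_zero by blast
  have "\<bar>Phi v p - Phi v q\<bar> / (real k + real l) \<le> infdist p ?S"
    unfolding infdist_notempty[OF ne]
  proof (rule cINF_greatest[OF ne])
    fix x assume "x \<in> ?S"
    then obtain w where w: "w \<in> lattice" "x = q + w" by blast
    have "\<bar>Phi v p - Phi v q\<bar> = \<bar>Phi v p - Phi v x\<bar>" using Phi_lattice[OF w(1)] w(2) by simp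
    also have "\<dots> \<le> \<bar>(uf p - v) - (uf x - v)\<bar>" unfolding Phi_def by (rule cos_lip)
    also have "\<dots> = \<bar>uf p - uf x\<bar>" by simp
    also have "\<dots> \<le> (real k + real l) * dist p x" by (rule uf_lip)
    finally show "\<bar>Phi v p - Phi v q\<bar> / (real k + real l) \<le> dist p x" using kl_pos by (simp add: divide_le_eq mult.commute)
  qed
  thus ?thesis unfolding tdist_def using kl_pos by (simp add: divide_le_eq mult.commute)
qed

lemma tdist_nonneg: "0 \<le> tdist p q" unfolding tdist_def by (rule infdist_nonneg)

lemma limit_sub:
  assumes e: "\<epsilon> > 0" and sol: "is_sol (Yfield m k l \<epsilon>) \<gamma>" "\<gamma> 0 = \<tau>"
    and conv: "((\<lambda>t. uf (\<gamma> t)) \<longlongrightarrow> v) F"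
    and tn: "filterlim tn F sequentially" and lim: "(\<lambda>n. tdist (\<gamma> (tn n)) q) \<longlonglongrightarrow> 0"
  shows "q \<in> line v"
proof -
  have c1: "(\<lambda>n. uf (\<gamma> (tn n))) \<longlonglongrightarrow> v" using filterlim_compose[OF conv tn] by simp
  have c2: "(\<lambda>n. Phi v (\<gamma> (tn n))) \<longlonglongrightarrow> cos (v - v)" unfolding Phi_def by (intro tendsto_intros c1)
  have c3: "(\<lambda>n. Phi v (\<gamma> (tn n))) \<longlonglongrightarrow> Phi v q"
  proof (rule metric_tendsto_imp_tendsto)
    show "(\<lambda>n. (real k + real l) * tdist (\<gamma> (tn n)) q) \<longlonglongrightarrow> 0" using tendsto_mult_right_zero[OF lim] by simp
    show "\<forall>\<^sub>F n in sequentially. dist (Phi v (\<gamma> (tn n))) (Phi v q) \<le> dist ((real k + real l) * tdist (\<gamma> (tn n)) q) 0"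
      using Phi_lip tdist_nonneg kl_pos by (simp add: dist_real_def)
  qed
  have "Phi v q = 1" using LIMSEQ_unique[OF c3 c2] by simp
  thus ?thesis unfolding Phi_def line_cos .
qed

lemma limit_sup:
  assumes e: "\<epsilon> > 0" and sol: "is_sol (Yfield m k l \<epsilon>) \<gamma>"
    and conv: "((\<lambda>t. uf (\<gamma> t)) \<longlongrightarrow> v) F"
    and q: "q \<in> line v" and sg: "sg = 1 \<or> sg = -1"
    and tnF: "\<And>c0. filterlim (\<lambda>n::nat. c0 + sg * (2 * pi * real k / \<epsilon>) * real n) F sequentially"
  shows "\<exists>tn. filterlim tn F sequentially \<and> (\<lambda>n. tdist (\<gamma> (tn n)) q) \<longlonglongrightarrow> 0"
proof -
  obtain w where w: "w \<in> lattice" "uf (q + w) = v" using line_move[OF q] by blast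
  define q' where "q' = q + w"
  define y0 where "y0 = snd (\<gamma> 0)"
  have kp: "real k > 0" using k1 by simp
  define tn where "tn n = (snd q' - y0) / \<epsilon> + sg * (2 * pi * real k / \<epsilon>) * real n" for n :: nat
  have tnF': "filterlim tn F sequentially" unfolding tn_def[abs_def] by (rule tnF)
  have c1: "(\<lambda>n. uf (\<gamma> (tn n))) \<longlonglongrightarrow> v" using filterlim_compose[OF conv tnF'] by simp
  have bound: "tdist (\<gamma> (tn n)) q \<le> \<bar>v - uf (\<gamma> (tn n))\<bar> / real k" for n
  proof -
    define N :: int where "N = (if sg = 1 then int n else - int n)"
    have sgN: "sg * real n = of_int N" unfolding N_def using sg by auto
    have et: "\<epsilon> * tn n = snd q' - y0 + 2 * pi * real k * (sg * real n)" unfolding tn_def using e by (simp add: field_simps)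
    have yt: "snd (\<gamma> (tn n)) = snd q' + 2 * pi * real k * of_int N"
      using sol_snd[OF sol(1), of "tn n"] et sgN unfolding y0_def by simp
    define x where "x = q' + (2 * pi * real l * of_int N, 2 * pi * real k * of_int N)"
    have xS: "x \<in> {q + w | w. w \<in> lattice}"
    proof -
      have "x = q + (w + (2 * pi * real l * of_int N, 2 * pi * real k * of_int N))" unfolding x_def q'_def by (simp add: add.assoc)
      thus ?thesis using lattice_add[OF w(1) lattice_nat[of N]] by blast
    qed
    have fq: "fst q' = (real l * snd q' - v) / real k" using w(2) kp unfolding q'_def uf_def by (simp add: field_simps)
    have "\<gamma> (tn n) - x = ((v - uf (\<gamma> (tn n))) / real k, 0)"
    proof -
      have "fst (\<gamma> (tn n)) = (real l * snd (\<gamma> (tn n)) - uf (\<gamma> (tn n))) / real k"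
        using kp by (simp add: uf_def)
      thus ?thesis unfolding x_def using yt fq kp by (simp add: prod_eq_iff field_simps)
    qed
    hence "dist (\<gamma> (tn n)) x = \<bar>v - uf (\<gamma> (tn n))\<bar> / real k" by (simp add: dist_norm abs_divide)
    moreover have "tdist (\<gamma> (tn n)) q \<le> dist (\<gamma> (tn n)) x" unfolding tdist_def by (rule infdist_le[OF xS])
    ultimately show ?thesis by simp
  qed
  have "(\<lambda>n. tdist (\<gamma> (tn n)) q) \<longlonglongrightarrow> 0"
  proof (rule tendsto_sandwich[of "\<lambda>n. 0" _ _ "\<lambda>n. \<bar>v - uf (\<gamma> (tn n))\<bar> / real k"])
    show "\<forall>\<^sub>F n in sequentially. 0 \<le> tdist (\<gamma> (tn n)) q" using tdist_nonneg by simp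
    show "\<forall>\<^sub>F n in sequentially. tdist (\<gamma> (tn n)) q \<le> \<bar>v - uf (\<gamma> (tn n))\<bar> / real k" using bound by simp
    show "(\<lambda>n. 0) \<longlonglongrightarrow> (0::real)" by simp
    have "(\<lambda>n. \<bar>v - uf (\<gamma> (tn n))\<bar> / real k) \<longlonglongrightarrow> \<bar>v - v\<bar> / real k" using kp by (intro tendsto_intros c1) auto
    thus "(\<lambda>n. \<bar>v - uf (\<gamma> (tn n))\<bar> / real k) \<longlonglongrightarrow> 0" by simp
  qed
  thus ?thesis using tnF' by blast
qed


lemma seq_top: "c > 0 \<Longrightarrow> filterlim (\<lambda>n::nat. c0 + 1 * c * real n) at_top sequentially"
  by (simp, intro filterlim_tendsto_add_at_top[OF tendsto_const] filterlim_tendsto_pos_mult_at_top[OF tendsto_const]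
      filterlim_real_sequentially) auto

lemma seq_bot: "c > 0 \<Longrightarrow> filterlim (\<lambda>n::nat. c0 + (-1) * c * real n) at_bot sequentially"
proof -
  assume c: "c > 0"
  have "filterlim (\<lambda>n::nat. - c0 + 1 * c * real n) at_top sequentially" by (rule seq_top[OF c])
  thus ?thesis by (subst filterlim_uminus_at_bot) simp
qed

lemma limits:
  assumes g: "good \<epsilon>" and nt: "\<forall>i\<in>{1..m}. \<tau> \<notin> line (um i \<epsilon>) \<and> \<tau> \<notin> line (up i \<epsilon>)"
  shows "(\<exists>i\<in>{1..m}. alpha_limit (Yfield m k l \<epsilon>) \<tau> = line (up i \<epsilon>)) \<and>
         (\<exists>j\<in>{1..m}. omega_limit (Yfield m k l \<epsilon>) \<tau> = line (um j \<epsilon>))"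
proof -
  have e: "0 < \<epsilon>" "real l * \<epsilon> < real k" using good_basic[OF g] by auto
  interpret S: scal "real m * real l * \<epsilon>" "real m * real k" using scal_ok e by auto
  have ale: "S.al = alE \<epsilon>" using al_eq e by simp
  have mp: "real m > 0" and kp: "real k > 0" using m1 k1 by auto
  define th0 where "th0 = real m * uf \<tau>"
  have ne: "th0 \<noteq> S.al + 2 * pi * of_int n \<and> th0 \<noteq> pi - S.al + 2 * pi * of_int n" for n :: int
  proof (rule ccontr)
    assume "\<not> ?thesis"
    hence "eqv \<epsilon> (uf \<tau>)" unfolding eqv_def th0_def ale by blast
    then obtain j where j: "j \<in> {1..m}" "line (uf \<tau>) = line (um j \<epsilon>) \<or> line (uf \<tau>) = line (up j \<epsilon>)"
      using eqv_idx by blast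
    have "\<tau> \<in> line (uf \<tau>)" unfolding line_def by (intro CollectI exI[of _ 0]) simp
    thus False using j nt by auto
  qed
  obtain f where f: "f 0 = th0" "\<And>t. (f has_real_derivative (real m * real l * \<epsilon> - real m * real k * sin (f t))) (at t)"
    using S.exists_sol[of th0] by blast
  define psi where "psi t = ((real l * (snd \<tau> + \<epsilon> * t) - f t / real m) / real k, snd \<tau> + \<epsilon> * t)" for t
  have psol: "is_sol (Yfield m k l \<epsilon>) psi" unfolding psi_def[abs_def] by (rule sol_build[OF f(2)])
  have p0: "psi 0 = \<tau>" unfolding psi_def using f(1) mp kp unfolding th0_def uf_def by (simp add: prod_eq_iff field_simps)
  have same: "(\<lambda>t. uf (\<gamma> t)) = (\<lambda>t. f t / real m)" if "is_sol (Yfield m k l \<epsilon>) \<gamma>" "\<gamma> 0 = \<tau>" for \<gamma>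
  proof
    fix t
    have "(\<lambda>t. real m * uf (\<gamma> t)) t = f t"
      by (rule S.uniq[OF sol_theta[OF that(1)] f(2)]) (simp add: that(2) f(1) th0_def)
    thus "uf (\<gamma> t) = f t / real m" using mp by (simp add: field_simps)
  qed
  have exs: "\<exists>\<gamma>. is_sol (Yfield m k l \<epsilon>) \<gamma> \<and> \<gamma> 0 = \<tau>" using psol p0 by blast
  have Tp: "2 * pi * real k / \<epsilon> > 0" using kp e by simp
  obtain n :: int where fn: "(f \<longlongrightarrow> S.al + 2 * pi * of_int n) at_top"
    using S.omega_sol[OF f(2)] ne f(1) by blast
  define v where "v = (S.al + 2 * pi * of_int n) / real m"
  have conv: "((\<lambda>t. uf (\<gamma> t)) \<longlongrightarrow> v) at_top" if "is_sol (Yfield m k l \<epsilon>) \<gamma>" "\<gamma> 0 = \<tau>" for \<gamma>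
    unfolding same[OF that] v_def by (intro tendsto_intros fn) (use mp in simp)
  have om: "omega_limit (Yfield m k l \<epsilon>) \<tau> = line v"
  proof (intro set_eqI iffI)
    fix q assume "q \<in> omega_limit (Yfield m k l \<epsilon>) \<tau>"
    then obtain \<gamma> tn where "is_sol (Yfield m k l \<epsilon>) \<gamma>" "\<gamma> 0 = \<tau>" "filterlim tn at_top sequentially"
      "(\<lambda>n. tdist (\<gamma> (tn n)) q) \<longlonglongrightarrow> 0" unfolding omega_limit_def by blast
    thus "q \<in> line v" using limit_sub[OF e(1) _ _ conv] by blast
  next
    fix q assume "q \<in> line v"
    from limit_sup[OF e(1) psol conv[OF psol p0] this, of 1] seq_top[OF Tp]
    obtain tn where "filterlim tn at_top sequentially" "(\<lambda>n. tdist (psi (tn n)) q) \<longlonglongrightarrow> 0" by auto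
    thus "q \<in> omega_limit (Yfield m k l \<epsilon>) \<tau>" unfolding omega_limit_def using psol p0 by blast
  qed
  obtain j where j: "j \<in> {1..m}" "line v = line ((alE \<epsilon> + 2 * pi * (real j - 1)) / real m)"
    using line_idx[of "alE \<epsilon>" n] unfolding v_def ale by blast
  have "line v = line (um j \<epsilon>)" using j(2) unfolding um_def by (simp add: algebra_simps)
  hence omega: "\<exists>j\<in>{1..m}. omega_limit (Yfield m k l \<epsilon>) \<tau> = line (um j \<epsilon>)" using om j(1) by blast
  obtain n' :: int where fn': "(f \<longlongrightarrow> pi - S.al + 2 * pi * of_int n') at_bot"
    using S.alpha_sol[OF f(2)] ne f(1) by blast
  define v' where "v' = (pi - S.al + 2 * pi * of_int n') / real m"
  have conv': "((\<lambda>t. uf (\<gamma> t)) \<longlongrightarrow> v') at_bot" if "is_sol (Yfield m k l \<epsilon>) \<gamma>" "\<gamma> 0 = \<tau>" for \<gamma>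
    unfolding same[OF that] v'_def by (intro tendsto_intros fn') (use mp in simp)
  have al: "alpha_limit (Yfield m k l \<epsilon>) \<tau> = line v'"
  proof (intro set_eqI iffI)
    fix q assume "q \<in> alpha_limit (Yfield m k l \<epsilon>) \<tau>"
    then obtain \<gamma> tn where "is_sol (Yfield m k l \<epsilon>) \<gamma>" "\<gamma> 0 = \<tau>" "filterlim tn at_bot sequentially"
      "(\<lambda>n. tdist (\<gamma> (tn n)) q) \<longlonglongrightarrow> 0" unfolding alpha_limit_def by blast
    thus "q \<in> line v'" using limit_sub[OF e(1) _ _ conv'] by blast
  next
    fix q assume "q \<in> line v'"
    from limit_sup[OF e(1) psol conv'[OF psol p0] this, of "-1"] seq_bot[OF Tp]
    obtain tn where "filterlim tn at_bot sequentially" "(\<lambda>n. tdist (psi (tn n)) q) \<longlonglongrightarrow> 0" by auto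
    thus "q \<in> alpha_limit (Yfield m k l \<epsilon>) \<tau>" unfolding alpha_limit_def using psol p0 by blast
  qed
  obtain i where i: "i \<in> {1..m}" "line v' = line ((pi - alE \<epsilon> + 2 * pi * (real i - 1)) / real m)"
    using line_idx[of "pi - alE \<epsilon>" n'] unfolding v'_def ale by blast
  have "line v' = line (up i \<epsilon>)" using i(2) unfolding up_def by (simp add: algebra_simps)
  hence "\<exists>i\<in>{1..m}. alpha_limit (Yfield m k l \<epsilon>) \<tau> = line (up i \<epsilon>)" using al i(1) by blast
  thus ?thesis using omega by blast
qed

end


theorem theorem1p1:
  fixes m k l :: nat
  assumes "m \<ge> 1" and "k \<ge> 1" and "coprime k l"
  shows "\<exists>\<epsilon>0 > 0. \<exists>\<delta> > 0. \<exists>Om Op :: nat \<Rightarrow> real \<Rightarrow> (real \<times> real) set.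
    (\<forall>i\<in>{1..m}.
       (\<forall>\<epsilon>\<in>{0<..\<epsilon>0}.
          limit_cycle (Yfield m k l \<epsilon>) (Om i \<epsilon>) \<and>
          Om i \<epsilon> \<subseteq> {p. infdist p (Cminus m k l i) < \<delta>} \<and>
          (\<forall>Orb. limit_cycle (Yfield m k l \<epsilon>) Orb \<and> Orb \<subseteq> {p. infdist p (Cminus m k l i) < \<delta>}
                 \<longrightarrow> Orb = Om i \<epsilon>) \<and>
          limit_cycle (Yfield m k l \<epsilon>) (Op i \<epsilon>) \<and>
          Op i \<epsilon> \<subseteq> {p. infdist p (Cplus m k l i) < \<delta>} \<and>
          (\<forall>Orb. limit_cycle (Yfield m k l \<epsilon>) Orb \<and> Orb \<subseteq> {p. infdist p (Cplus m k l i) < \<delta>}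
                 \<longrightarrow> Orb = Op i \<epsilon>) \<and>
          hyperbolic_attracting (Yfield m k l \<epsilon>) (Om i \<epsilon>) \<and>
          hyperbolic_repelling (Yfield m k l \<epsilon>) (Op i \<epsilon>) \<and>
          torus_knot k l (Om i \<epsilon>) \<and> torus_knot k l (Op i \<epsilon>)) \<and>
       \<not> canard_family (Yfield m k l 0) (Om i) \<and>
       canard_family (Yfield m k l 0) (Op i) \<and>
       hausdorff_tendsto (Om i) (Cminus m k l i) \<and>
       hausdorff_tendsto (Op i) (Cplus m k l i)) \<and>
    (\<forall>\<epsilon>\<in>{0<..\<epsilon>0}. \<forall>\<tau>.
       (\<forall>i\<in>{1..m}. \<tau> \<notin> Om i \<epsilon> \<and> \<tau> \<notin> Op i \<epsilon>) \<longrightarrow>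
       (\<exists>i\<in>{1..m}. alpha_limit (Yfield m k l \<epsilon>) \<tau> = Op i \<epsilon>) \<and>
       (\<exists>j\<in>{1..m}. omega_limit (Yfield m k l \<epsilon>) \<tau> = Om j \<epsilon>))"
proof -
  interpret T: tor m k l using assms by unfold_locales
  obtain e0 where e0: "e0 > 0" "\<forall>\<epsilon>. 0 < \<epsilon> \<and> \<epsilon> \<le> e0 \<longrightarrow> T.good \<epsilon>" using T.good_ex by blast
  have gd: "T.good \<epsilon>" if "\<epsilon> \<in> {0<..e0}" for \<epsilon> using e0(2) that by auto
  define Om where "Om i \<epsilon> = T.line (T.um i \<epsilon>)" for i \<epsilon>
  define Op where "Op i \<epsilon> = T.line (T.up i \<epsilon>)" for i \<epsilon>
  have Ome: "Om i = (\<lambda>\<epsilon>. T.line (T.um i \<epsilon>))" for i unfolding Om_def by simp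
  have Ope: "Op i = (\<lambda>\<epsilon>. T.line (T.up i \<epsilon>))" for i unfolding Op_def by simp
  have part1: "limit_cycle (Yfield m k l \<epsilon>) (Om i \<epsilon>) \<and>
          Om i \<epsilon> \<subseteq> {p. infdist p (Cminus m k l i) < T.d0} \<and>
          (\<forall>Orb. limit_cycle (Yfield m k l \<epsilon>) Orb \<and> Orb \<subseteq> {p. infdist p (Cminus m k l i) < T.d0}
                 \<longrightarrow> Orb = Om i \<epsilon>) \<and>
          limit_cycle (Yfield m k l \<epsilon>) (Op i \<epsilon>) \<and>
          Op i \<epsilon> \<subseteq> {p. infdist p (Cplus m k l i) < T.d0} \<and>
          (\<forall>Orb. limit_cycle (Yfield m k l \<epsilon>) Orb \<and> Orb \<subseteq> {p. infdist p (Cplus m k l i) < T.d0}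
                 \<longrightarrow> Orb = Op i \<epsilon>) \<and>
          hyperbolic_attracting (Yfield m k l \<epsilon>) (Om i \<epsilon>) \<and>
          hyperbolic_repelling (Yfield m k l \<epsilon>) (Op i \<epsilon>) \<and>
          torus_knot k l (Om i \<epsilon>) \<and> torus_knot k l (Op i \<epsilon>)" if "\<epsilon> \<in> {0<..e0}" for i \<epsilon>
  proof -
    have g: "T.good \<epsilon>" using gd[OF that] .
    have e: "0 < \<epsilon>" "real l * \<epsilon> < real k" using T.good_basic[OF g] by auto
    interpret S: scal "real m * real l * \<epsilon>" "real m * real k" using T.scal_ok e by auto
    have Tp: "2 * pi * real k / \<epsilon> > 0" using assms(2) e by simp
    have lcm: "limit_cycle (Yfield m k l \<epsilon>) (Om i \<epsilon>)" unfolding Om_def using T.lc_line[OF g] by blast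
    have lcp: "limit_cycle (Yfield m k l \<epsilon>) (Op i \<epsilon>)" unfolding Op_def using T.lc_line[OF g] by blast
    have x: "S.Om * (2 * pi * real k / \<epsilon>) > 0" by (rule mult_pos_pos[OF S.Om_pos Tp])
    have "exp (- S.Om * (2 * pi * real k / \<epsilon>)) < 1" using x by simp
    hence ha: "hyperbolic_attracting (Yfield m k l \<epsilon>) (Om i \<epsilon>)"
      unfolding hyperbolic_attracting_def Om_def using lcm T.poincare_um[OF g, of i] unfolding Om_def by auto
    have "exp (S.Om * (2 * pi * real k / \<epsilon>)) > 1" using x by simp
    hence hr: "hyperbolic_repelling (Yfield m k l \<epsilon>) (Op i \<epsilon>)"
      unfolding hyperbolic_repelling_def Op_def using lcp T.poincare_up[OF g, of i] unfolding Op_def by auto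
    show ?thesis
      using lcm lcp ha hr T.near_lines[OF g, of i] T.uniq_near[OF g, of _ i] T.knot_line
      unfolding Om_def Op_def T.Cminus_eq T.Cplus_eq by blast
  qed
  show ?thesis
  proof (rule exI[of _ e0], rule conjI[OF e0(1)], rule exI[of _ T.d0], rule conjI[OF T.d0_pos],
      rule exI[of _ Om], rule exI[of _ Op], rule conjI; (rule ballI)?; (intro conjI)?)
    fix i assume "i \<in> {1..m}"
    show "\<forall>\<epsilon>\<in>{0<..e0}. limit_cycle (Yfield m k l \<epsilon>) (Om i \<epsilon>) \<and>
          Om i \<epsilon> \<subseteq> {p. infdist p (Cminus m k l i) < T.d0} \<and>
          (\<forall>Orb. limit_cycle (Yfield m k l \<epsilon>) Orb \<and> Orb \<subseteq> {p. infdist p (Cminus m k l i) < T.d0}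
                 \<longrightarrow> Orb = Om i \<epsilon>) \<and>
          limit_cycle (Yfield m k l \<epsilon>) (Op i \<epsilon>) \<and>
          Op i \<epsilon> \<subseteq> {p. infdist p (Cplus m k l i) < T.d0} \<and>
          (\<forall>Orb. limit_cycle (Yfield m k l \<epsilon>) Orb \<and> Orb \<subseteq> {p. infdist p (Cplus m k l i) < T.d0}
                 \<longrightarrow> Orb = Op i \<epsilon>) \<and>
          hyperbolic_attracting (Yfield m k l \<epsilon>) (Om i \<epsilon>) \<and>
          hyperbolic_repelling (Yfield m k l \<epsilon>) (Op i \<epsilon>) \<and>
          torus_knot k l (Om i \<epsilon>) \<and> torus_knot k l (Op i \<epsilon>)" using part1 by blast
  next
    fix i assume "i \<in> {1..m}"
    show "\<not> canard_family (Yfield m k l 0) (Om i)" unfolding Ome by (rule T.not_canard_um)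
  next
    fix i assume "i \<in> {1..m}"
    show "canard_family (Yfield m k l 0) (Op i)" unfolding Ope by (rule T.canard_up)
  next
    fix i assume "i \<in> {1..m}"
    show "hausdorff_tendsto (Om i) (Cminus m k l i)" unfolding Ome T.Cminus_eq by (rule T.haus(1))
  next
    fix i assume "i \<in> {1..m}"
    show "hausdorff_tendsto (Op i) (Cplus m k l i)" unfolding Ope T.Cplus_eq by (rule T.haus(2))
  next
    fix \<epsilon> \<tau> assume "\<epsilon> \<in> {0<..e0}"
    show "\<forall>\<tau>. (\<forall>i\<in>{1..m}. \<tau> \<notin> Om i \<epsilon> \<and> \<tau> \<notin> Op i \<epsilon>) \<longrightarrow>
       (\<exists>i\<in>{1..m}. alpha_limit (Yfield m k l \<epsilon>) \<tau> = Op i \<epsilon>) \<and>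
       (\<exists>j\<in>{1..m}. omega_limit (Yfield m k l \<epsilon>) \<tau> = Om j \<epsilon>)"
      using T.limits[OF gd[OF \<open>\<epsilon> \<in> {0<..e0}\<close>]] unfolding Om_def Op_def by blast
  qed
qed

end
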